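(* Let $G$ be a group of order $80$ whose Sylow $5$-subgroups are not normal. Then every connected Cayley graph on $G$ has a hamiltonian cycle.
   Context: For a group $G$ and a subset $S \subseteq G$, the Cayley graph $\mathrm{Cay}(G;S)$ has vertex set $G$, with $g$ adjacent to $gs$ for every $g \in G$ and $s \in S \cup S^{-1}$; it is connected iff $S$ generates $G$. *)

theory Defs
  imports "HOL-Algebra.Algebra"
begin

definition sylow_subgroup :: "('a, 'b) monoid_scheme \<Rightarrow> nat \<Rightarrow> 'a set \<Rightarrow> bool" where
  "sylow_subgroup G p P \<longleftrightarrow>
     subgroup P G \<and> card P = p ^ multiplicity p (order G)"

definition cayley_adj :: "('a, 'b) monoid_scheme \<Rightarrow> 'a set \<Rightarrow> 'a \<Rightarrow> 'a \<Rightarrow> bool" where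
  "cayley_adj G S g h \<longleftrightarrow> g \<in> carrier G \<and> h \<in> carrier G \<and>
     (\<exists>s \<in> S \<union> (\<lambda>x. inv\<^bsub>G\<^esub> x) ` S. h = g \<otimes>\<^bsub>G\<^esub> s)"

definition cayley_hamiltonian :: "('a, 'b) monoid_scheme \<Rightarrow> 'a set \<Rightarrow> bool" where
  "cayley_hamiltonian G S \<longleftrightarrow>
     (\<exists>vs. distinct vs \<and> set vs = carrier G \<and> length vs \<ge> 3 \<and>
        (\<forall>i < length vs. cayley_adj G S (vs ! i) (vs ! ((i + 1) mod length vs))))"

end

theory Submission
  imports Defs
begin

lemma funpow_in: "f ` Xs \<subseteq> Xs \<Longrightarrow> x \<in> Xs \<Longrightarrow> (f^^n) x \<in> Xs"
  by (induction n) auto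

lemma funpow_mod5:
  assumes "f ` Xs \<subseteq> Xs" "\<forall>x\<in>Xs. (f^^5) x = x" "x \<in> Xs"
  shows "(f^^n) x = (f^^(n mod 5)) x"
proof (induction n rule: less_induct)
  case (less n)
  show ?case
  proof (cases "n < 5")
    case True then show ?thesis by simp
  next
    case False
    then have "n = (n - 5) + 5" by simp
    then have "(f^^n) x = (f^^(n-5)) ((f^^5) x)" by (metis funpow_add o_apply)
    also have "\<dots> = (f^^(n-5)) x" using assms by simp
    also have "\<dots> = (f^^((n-5) mod 5)) x" using less.IH[of "n-5"] False by linarith
    also have "(n-5) mod 5 = n mod 5" using False by (simp add: mod_if)
    finally show ?thesis .
  qed
qed

lemma orb5:
  assumes "finite Xs" "f ` Xs \<subseteq> Xs" "\<forall>x\<in>Xs. (f^^5) x = x" "\<forall>x\<in>Xs. f x \<noteq> x"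
  shows "5 dvd card Xs"
  using assms
proof (induction "card Xs" arbitrary: Xs rule: less_induct)
  case less
  show ?case
  proof (cases "Xs = {}")
    case True then show ?thesis by simp
  next
    case False
    then obtain x where x: "x \<in> Xs" by blast
    define Ob where "Ob = (\<lambda>i. (f^^i) x) ` {..<5}"
    have ObX: "Ob \<subseteq> Xs" unfolding Ob_def using funpow_in[OF less.prems(2) x] by auto
    have fix1: "(f^^d) y \<noteq> y" if y: "y \<in> Xs" and d: "0 < d" "d < 5" for y d
    proof
      assume h: "(f^^d) y = y"
      have pw: "(f^^(d*m)) y = y" for m
      proof (induction m)
        case 0 then show ?case by simp
      next
        case (Suc m)
        have "(f^^(d*Suc m)) y = (f^^(d*m)) ((f^^d) y)"
          by (metis add.commute funpow_add mult_Suc_right o_apply)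
        then show ?case using h Suc by simp
      qed
      have "\<exists>m. (d*m) mod 5 = 1"
      proof -
        have "d = 1 \<or> d = 2 \<or> d = 3 \<or> d = 4" using d by auto
        then show ?thesis
        proof (elim disjE)
          assume "d = 1" then show ?thesis by (intro exI[of _ 1]) simp
        next
          assume "d = 2" then show ?thesis by (intro exI[of _ 3]) simp
        next
          assume "d = 3" then show ?thesis by (intro exI[of _ 2]) simp
        next
          assume "d = 4" then show ?thesis by (intro exI[of _ 4]) simp
        qed
      qed
      then obtain m where m: "(d*m) mod 5 = 1" by blast
      have "f y = (f^^((d*m) mod 5)) y" using m by simp
      also have "\<dots> = (f^^(d*m)) y" using funpow_mod5[OF less.prems(2,3) y] by simp
      also have "\<dots> = y" by (rule pw)
      finally show False using less.prems(4) y by blast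
    qed
    have inj: "inj_on (\<lambda>i. (f^^i) x) {..<5}"
    proof (rule inj_onI)
      fix i j assume ij: "i \<in> {..<5}" "j \<in> {..<5}" "(f^^i) x = (f^^j) x"
      show "i = j"
      proof (rule ccontr)
        assume ne: "i \<noteq> j"
        { fix i j :: nat assume lt: "i < j" "j < 5" and e: "(f^^i) x = (f^^j) x"
          have yX: "(f^^i) x \<in> Xs" using funpow_in[OF less.prems(2) x] .
          have "(f^^(j-i)) ((f^^i) x) = (f^^j) x"
            using lt by (metis funpow_add le_add_diff_inverse2 less_imp_le o_apply)
          then have "(f^^(j-i)) ((f^^i) x) = (f^^i) x" using e by simp
          then have False using fix1[OF yX, of "j-i"] lt by simp }
        then show False using ij ne by (metis linorder_neqE_nat lessThan_iff)
      qed
    qed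
    have cOb: "card Ob = 5" unfolding Ob_def using card_image[OF inj] by simp
    have fOb: "f ` Ob \<subseteq> Ob"
    proof
      fix z assume "z \<in> f ` Ob"
      then obtain i where i: "i < 5" "z = f ((f^^i) x)" unfolding Ob_def by auto
      then have "z = (f^^(Suc i)) x" by simp
      also have "\<dots> = (f^^(Suc i mod 5)) x" using funpow_mod5[OF less.prems(2,3) x] by blast
      finally show "z \<in> Ob" unfolding Ob_def by auto
    qed
    have fR: "f ` (Xs - Ob) \<subseteq> Xs - Ob"
    proof
      fix z assume "z \<in> f ` (Xs - Ob)"
      then obtain w where w: "w \<in> Xs" "w \<notin> Ob" "z = f w" by auto
      have "z \<in> Xs" using w less.prems(2) by auto
      moreover have "z \<notin> Ob"
      proof
        assume "z \<in> Ob"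
        then obtain i where i: "i < 5" "f w = (f^^i) x" unfolding Ob_def using w by auto
        have "w = (f^^5) w" using less.prems(3) w by simp
        also have "\<dots> = (f^^4) (f w)" by (metis funpow_Suc_right o_apply numeral_eq_Suc pred_numeral_simps(3) Suc_numeral semiring_norm(2) semiring_norm(8) eval_nat_numeral(3))
        also have "\<dots> = (f^^(4+i)) x" using i by (simp add: funpow_add)
        also have "\<dots> = (f^^((4+i) mod 5)) x" using funpow_mod5[OF less.prems(2,3) x] by blast
        finally have "w \<in> Ob" unfolding Ob_def by auto
        then show False using w by simp
      qed
      ultimately show "z \<in> Xs - Ob" by simp
    qed
    have lt: "card (Xs - Ob) < card Xs"
      using cOb ObX less.prems(1) by (metis card_Diff_subset card_mono diff_less finite_subset zero_less_numeral card_gt_0_iff x less_le_trans)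
    have "5 dvd card (Xs - Ob)"
      using less.hyps[OF lt _ fR] less.prems by auto
    moreover have "card Xs = card (Xs - Ob) + card Ob"
      using ObX less.prems(1) by (metis card_Diff_subset finite_subset card_mono le_add_diff_inverse2)
    ultimately show ?thesis using cOb by simp
  qed
qed


lemma divs5: "d dvd (5::nat) \<Longrightarrow> d = 1 \<or> d = 5"
proof -
  assume a: "d dvd 5"
  then have "d \<le> 5" by (simp add: dvd_imp_le)
  moreover have "d \<noteq> 0" using a by (metis dvd_0_left zero_neq_numeral)
  ultimately have "d \<in> {1,2,3,4,5}" by auto
  then show ?thesis using a by auto
qed

lemma small_cases16: "(d::nat) \<le> 16 \<Longrightarrow> d \<in> {0,1,2,3,4,5,6,7,8,9,10,11,12,13,14,15,16}"
  by (simp add: le_Suc_eq numeral_eq_Suc)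

lemma divs16: "d dvd (16::nat) \<Longrightarrow> d \<in> {1,2,4,8,16}"
proof -
  assume a: "d dvd 16"
  then have "d \<le> 16" by (simp add: dvd_imp_le)
  then have "d \<in> {0,1,2,3,4,5,6,7,8,9,10,11,12,13,14,15,16}" by (rule small_cases16)
  then show ?thesis using a by auto
qed

context group
begin

lemma pow_mod_ord5:
  assumes "x \<in> carrier G" "x [^] (5::nat) = \<one>"
  shows "x [^] (n::nat) = x [^] (n mod 5)"
proof -
  have e: "5 * (n div 5) + n mod 5 = n" by simp
  have 1: "x [^] (5 * (n div 5)) \<otimes> x [^] (n mod 5) = x [^] n"
    using nat_pow_mult[OF assms(1), of "5 * (n div 5)" "n mod 5"] e by simp
  have 2: "x [^] (5 * (n div 5)) = \<one>"
    using nat_pow_pow[OF assms(1), of 5 "n div 5"] assms(2) by simp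
  show ?thesis using 1 2 assms(1) by simp
qed

lemma pow16_5_one:
  assumes "x \<in> carrier G" "x [^] (5::nat) = \<one>" "x [^] (16::nat) = \<one>"
  shows "x = \<one>"
proof -
  have "x [^] (16::nat) = x [^] ((16::nat) mod 5)" by (rule pow_mod_ord5[OF assms(1,2)])
  also have "(16::nat) mod 5 = 1" by simp
  finally show ?thesis using assms(1,3) by simp
qed

lemma ord5:
  assumes "x \<in> carrier G" "x \<noteq> \<one>" "x [^] (5::nat) = \<one>"
  shows "ord x = 5"
proof -
  have "ord x dvd 5" using pow_eq_id[OF assms(1)] assms(3) by simp
  moreover have "ord x \<noteq> 1" using ord_eq_1[OF assms(1)] assms(2) by simp
  ultimately show ?thesis using divs5 by blast
qed

lemma sub_dvd:
  assumes "subgroup H G" "subgroup K G" "K \<subseteq> H" "finite H"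
  shows "card K dvd card H"
proof -
  interpret Hg: group "G\<lparr>carrier := H\<rparr>" using subgroup.subgroup_is_group assms group_axioms by blast
  have "subgroup K (G\<lparr>carrier := H\<rparr>)" using subgroup_incl assms by blast
  then have "card (rcosets\<^bsub>G\<lparr>carrier := H\<rparr>\<^esub> K) * card K = order (G\<lparr>carrier := H\<rparr>)"
    using Hg.lagrange by blast
  moreover have "order (G\<lparr>carrier := H\<rparr>) = card H" by (simp add: order_def)
  ultimately have "card H = card (rcosets\<^bsub>G\<lparr>carrier := H\<rparr>\<^esub> K) * card K" by simp
  then show ?thesis by (simp add: dvd_def)
qed

lemma sub_dvd_order:
  assumes "subgroup H G" "finite (carrier G)"
  shows "card H dvd order G"
  using lagrange[OF assms(1)] by (metis dvd_def mult.commute)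

lemma pow_in_subgroup: "subgroup H G \<Longrightarrow> x \<in> H \<Longrightarrow> x [^] (n::nat) \<in> H"
  by (induction n) (auto simp: subgroup.one_closed subgroup.m_closed)

lemma gen5:
  assumes "finite (carrier G)" "x \<in> carrier G" "x \<noteq> \<one>" "x [^] (5::nat) = \<one>"
  shows "card (generate G {x}) = 5" "generate G {x} = (\<lambda>i. x [^] i) ` {..<(5::nat)}"
proof -
  show "card (generate G {x}) = 5" using generate_pow_card[OF assms(2)] ord5[OF assms(2-4)] by simp
  have "generate G {x} = {x [^] k | k. k \<in> (UNIV :: nat set)}"
    using generate_pow_on_finite_carrier assms by blast
  also have "\<dots> = (\<lambda>i. x [^] i) ` {..<(5::nat)}"
  proof
    show "{x [^] k |k. k \<in> (UNIV :: nat set)} \<subseteq> (\<lambda>i. x [^] i) ` {..<(5::nat)}"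
    proof
      fix y assume "y \<in> {x [^] k |k. k \<in> (UNIV :: nat set)}"
      then obtain k :: nat where "y = x [^] k" by blast
      then have "y = x [^] (k mod 5)" using pow_mod_ord5[OF assms(2,4)] by simp
      moreover have "k mod 5 \<in> {..<5}" by simp
      ultimately show "y \<in> (\<lambda>i. x [^] i) ` {..<(5::nat)}" by blast
    qed
  qed auto
  finally show "generate G {x} = (\<lambda>i. x [^] i) ` {..<(5::nat)}" .
qed

lemma sub5_gen:
  assumes "finite (carrier G)" "subgroup P G" "card P = 5" "z \<in> P" "z \<noteq> \<one>"
  shows "P = generate G {z}"
proof -
  have z: "z \<in> carrier G" using subgroup.mem_carrier[OF assms(2,4)] .
  have sub: "generate G {z} \<subseteq> P" using generate_subgroup_incl[of "{z}" P] assms(2,4) by simp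
  have fP: "finite P" using assms(3) card.infinite by fastforce
  have "card (generate G {z}) dvd 5"
    using sub_dvd[OF assms(2) generate_is_subgroup[of "{z}"] sub fP] z assms(3) by simp
  moreover have "card (generate G {z}) \<noteq> 1" using generate_pow_card[OF z] ord_eq_1[OF z] assms(5) by simp
  ultimately have "card (generate G {z}) = 5" using divs5 by blast
  then show ?thesis using card_subset_eq[OF fP sub] assms(3) by simp
qed

lemma sub5_pow5:
  assumes "finite (carrier G)" "subgroup P G" "card P = 5" "z \<in> P"
  shows "z [^] (5::nat) = \<one>"
proof (cases "z = \<one>")
  case True then show ?thesis by simp
next
  case False
  have z: "z \<in> carrier G" using subgroup.mem_carrier[OF assms(2,4)] .
  have "ord z = 5" using generate_pow_card[OF z] sub5_gen[OF assms False] assms by simp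
  then show ?thesis using pow_ord_eq_1[OF z] by simp
qed

end

context group
begin

lemma comm_pow1:
  assumes "x \<in> carrier G" "y \<in> carrier G" "x \<otimes> y = y \<otimes> x"
  shows "x [^] (n::nat) \<otimes> y = y \<otimes> x [^] n"
proof (induction n)
  case 0 then show ?case using assms by simp
next
  case (Suc n)
  have "x [^] Suc n \<otimes> y = x [^] n \<otimes> (x \<otimes> y)" using assms by (simp add: m_assoc)
  also have "\<dots> = (x [^] n \<otimes> y) \<otimes> x" using assms by (simp add: m_assoc)
  also have "\<dots> = y \<otimes> x [^] Suc n" using Suc assms by (simp add: m_assoc)
  finally show ?case .
qed

lemma comm_pow2:
  assumes "x \<in> carrier G" "y \<in> carrier G" "x \<otimes> y = y \<otimes> x"
  shows "x [^] (n::nat) \<otimes> y [^] (m::nat) = y [^] m \<otimes> x [^] n"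
proof -
  have "y \<otimes> x = x \<otimes> y" using assms by simp
  then have "y [^] m \<otimes> x = x \<otimes> y [^] m" using comm_pow1 assms by simp
  then have "x \<otimes> y [^] m = y [^] m \<otimes> x" by simp
  then show ?thesis using comm_pow1[of x "y [^] m" n] assms by simp
qed

lemma no25:
  assumes fin: "finite (carrier G)" and o80: "order G = 80"
    and q: "q \<in> carrier G" "q \<noteq> \<one>" "q [^] (5::nat) = \<one>"
    and z: "z \<in> carrier G" "z [^] (5::nat) = \<one>"
    and cm: "q \<otimes> z = z \<otimes> q" and nz: "z \<notin> generate G {q}"
  shows False
proof -
  define f where "f = (\<lambda>(i::nat, j::nat). q [^] i \<otimes> z [^] j)"
  define H where "H = f ` ({..<5} \<times> {..<5})"
  have fc: "f p \<in> carrier G" for p using q z unfolding f_def by (auto split: prod.splits)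
  have mul: "f (i, j) \<otimes> f (k, l) = f ((i + k) mod 5, (j + l) mod 5)" for i j k l
  proof -
    have "f (i, j) \<otimes> f (k, l) = q [^] i \<otimes> (z [^] j \<otimes> q [^] k) \<otimes> z [^] l"
      unfolding f_def using q z by (simp add: m_assoc)
    also have "\<dots> = q [^] i \<otimes> (q [^] k \<otimes> z [^] j) \<otimes> z [^] l"
      using comm_pow2[OF z(1) q(1), of j k] cm by simp
    also have "\<dots> = (q [^] i \<otimes> q [^] k) \<otimes> (z [^] j \<otimes> z [^] l)"
      using q z by (simp add: m_assoc)
    also have "\<dots> = q [^] (i + k) \<otimes> z [^] (j + l)"
      using q z by (simp only: nat_pow_mult)
    also have "\<dots> = f ((i + k) mod 5, (j + l) mod 5)"
      unfolding f_def using pow_mod_ord5[OF q(1) q(3)] pow_mod_ord5[OF z(1) z(2)] by simp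
    finally show ?thesis .
  qed
  have Hc: "H \<subseteq> carrier G" unfolding H_def using fc by auto
  have Hm: "a \<otimes> b \<in> H" if "a \<in> H" "b \<in> H" for a b
    using that mul unfolding H_def by auto
  have H1: "\<one> \<in> H" unfolding H_def f_def by (intro image_eqI[of _ _ "(0,0)"]) (use q z in auto)
  have Hp: "a [^] (n::nat) \<in> H" if "a \<in> H" for a n
  proof (induction n)
    case 0 then show ?case using H1 by simp
  next
    case (Suc n) then show ?case using Hm that by simp
  qed
  have H5: "a [^] (5::nat) = \<one>" if aH: "a \<in> H" for a
  proof -
    obtain p where p: "a = f p" using aH unfolding H_def by blast
    obtain i j where "p = (i, j)" by (cases p)
    then have a: "a = q [^] i \<otimes> z [^] j" using p unfolding f_def by simp
    have "q [^] i \<otimes> z [^] j = z [^] j \<otimes> q [^] i" using comm_pow2[OF q(1) z(1)] cm by simp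
    then have "a [^] (5::nat) = (q [^] i) [^] (5::nat) \<otimes> (z [^] j) [^] (5::nat)"
      using a pow_mult_distrib q z by simp
    also have "\<dots> = \<one>" using q z by (simp add: nat_pow_pow mult.commute[of i] mult.commute[of j] nat_pow_pow[symmetric])
    finally show ?thesis .
  qed
  have Hi: "inv a \<in> H" if "a \<in> H" for a
  proof -
    have ac: "a \<in> carrier G" using that Hc by auto
    have "a [^] (4::nat) \<otimes> a = \<one>" using H5[OF that] ac by (simp add: nat_pow_Suc[symmetric] del: nat_pow_Suc)
    then have "inv a = a [^] (4::nat)" using inv_equality ac by simp
    then show ?thesis using Hp that by simp
  qed
  have sH: "subgroup H G" by (rule subgroupI) (use Hc H1 Hi Hm in auto)
  define P where "P = generate G {q}"
  have Pe: "P = (\<lambda>i. q [^] i) ` {..<(5::nat)}" "card P = 5" unfolding P_def using gen5 fin q by auto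
  have sP: "subgroup P G" unfolding P_def using generate_is_subgroup q by simp
  have inj: "inj_on f ({..<5} \<times> {..<5})"
  proof (rule inj_onI)
    fix a b assume ab: "a \<in> {..<5} \<times> {..<5}" "b \<in> {..<5} \<times> {..<5}" "f a = f b"
    obtain i j where a: "a = (i, j)" "i < 5" "j < 5" using ab by auto
    obtain k l where b: "b = (k, l)" "k < 5" "l < 5" using ab by auto
    have e: "q [^] i \<otimes> z [^] j = q [^] k \<otimes> z [^] l" using ab a b unfolding f_def by simp
    have "q [^] (5 - i) \<otimes> (q [^] i \<otimes> z [^] j) \<otimes> z [^] (5 - l) = q [^] (5 - i) \<otimes> (q [^] k \<otimes> z [^] l) \<otimes> z [^] (5 - l)"
      using e by simp
    then have "q [^] (5 - i + i) \<otimes> z [^] (j + (5 - l)) = q [^] (5 - i + k) \<otimes> z [^] (l + (5 - l))"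
      using q z by (simp add: m_assoc nat_pow_mult[symmetric])
    then have e2: "z [^] (j + (5 - l)) = q [^] (5 - i + k)"
      using a b q z pow_mod_ord5[OF q(1) q(3), of "5 - i + i"] pow_mod_ord5[OF z(1) z(2), of "l + (5 - l)"]
      by simp
    have jl: "j = l"
    proof (rule ccontr)
      assume "j \<noteq> l"
      define d where "d = (j + (5 - l)) mod 5"
      have "d \<noteq> 0" unfolding d_def using a(3) b(3) \<open>j \<noteq> l\<close> by presburger
      then have d: "d \<noteq> 0" "d < 5" unfolding d_def by auto
      have zd: "z [^] d \<in> P"
        using e2 pow_mod_ord5[OF z(1) z(2), of "j + (5 - l)"] Pe(1) pow_in_subgroup[OF sP, of q] 
          generate.incl[of q "{q}" G] unfolding d_def P_def by (metis insertI1)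
      obtain e where de: "(d * e) mod 5 = 1"
      proof -
        have "d = 1 \<or> d = 2 \<or> d = 3 \<or> d = 4" using d by auto
        then show ?thesis
        proof (elim disjE)
          assume "d = 1" then show ?thesis using that[of 1] by simp
        next
          assume "d = 2" then show ?thesis using that[of 3] by simp
        next
          assume "d = 3" then show ?thesis using that[of 2] by simp
        next
          assume "d = 4" then show ?thesis using that[of 4] by simp
        qed
      qed
      have "(z [^] d) [^] e \<in> P" using pow_in_subgroup[OF sP zd] .
      moreover have "(z [^] d) [^] e = z" using z nat_pow_pow pow_mod_ord5[OF z(1) z(2), of "d * e"] de by simp
      ultimately show False using nz unfolding P_def by simp
    qed
    have "q [^] i = q [^] k" using e jl q z by simp
    moreover have "inj_on (\<lambda>i. q [^] i) {..<(5::nat)}"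
      using Pe inj_on_iff_eq_card[of "{..<(5::nat)}" "\<lambda>i. q [^] i"] by simp
    ultimately have "i = k" using a b by (meson inj_on_def lessThan_iff)
    then show "a = b" using a b jl by simp
  qed
  have "card H = 25" unfolding H_def using card_image[OF inj] by simp
  moreover have "card H dvd 80" using sub_dvd_order[OF sH fin] o80 by simp
  ultimately show False by simp
qed

end

lemma mult5_80: "multiplicity (5::nat) 80 = 1"
  by (rule multiplicity_eqI) simp_all

context group
begin

lemma inv_cancel_left: "g \<in> carrier G \<Longrightarrow> x \<in> carrier G \<Longrightarrow> inv g \<otimes> (g \<otimes> x) = x"
  by (simp add: m_assoc[symmetric])

lemma inv_cancel_left2: "g \<in> carrier G \<Longrightarrow> x \<in> carrier G \<Longrightarrow> g \<otimes> (inv g \<otimes> x) = x"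
  by (simp add: m_assoc[symmetric])

abbreviation cact where "cact \<equiv> (\<lambda>g. \<lambda>H \<in> {H. H \<subseteq> carrier G}. g <# H #> inv g)"

lemma conjset:
  assumes "H \<subseteq> carrier G" "g \<in> carrier G"
  shows "cact g H = (\<lambda>h. g \<otimes> h \<otimes> inv g) ` H"
  using assms by (auto simp: l_coset_def r_coset_def)

lemma conj_subgroup:
  assumes "subgroup P G" "g \<in> carrier G"
  shows "subgroup ((\<lambda>h. g \<otimes> h \<otimes> inv g) ` P) G"
proof (rule subgroupI)
  have Pc: "P \<subseteq> carrier G" using subgroup.subset[OF assms(1)] .
  show "(\<lambda>h. g \<otimes> h \<otimes> inv g) ` P \<subseteq> carrier G" using Pc assms by auto
  show "(\<lambda>h. g \<otimes> h \<otimes> inv g) ` P \<noteq> {}" using subgroup.one_closed[OF assms(1)] by blast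
  fix a assume "a \<in> (\<lambda>h. g \<otimes> h \<otimes> inv g) ` P"
  then obtain h where h: "h \<in> P" "a = g \<otimes> h \<otimes> inv g" by blast
  have hc: "h \<in> carrier G" using h Pc by auto
  have "inv a = g \<otimes> inv h \<otimes> inv g" using h hc assms by (simp add: inv_mult_group m_assoc)
  then show "inv a \<in> (\<lambda>h. g \<otimes> h \<otimes> inv g) ` P" using subgroup.m_inv_closed[OF assms(1) h(1)] by blast
next
  have Pc: "P \<subseteq> carrier G" using subgroup.subset[OF assms(1)] .
  fix a b assume "a \<in> (\<lambda>h. g \<otimes> h \<otimes> inv g) ` P" "b \<in> (\<lambda>h. g \<otimes> h \<otimes> inv g) ` P"
  then obtain h k where hk: "h \<in> P" "a = g \<otimes> h \<otimes> inv g" "k \<in> P" "b = g \<otimes> k \<otimes> inv g" by blast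
  have hc: "h \<in> carrier G" "k \<in> carrier G" using hk Pc by auto
  have "a \<otimes> b = g \<otimes> (h \<otimes> k) \<otimes> inv g" using hk hc assms by (simp add: m_assoc inv_cancel_left)
  then show "a \<otimes> b \<in> (\<lambda>h. g \<otimes> h \<otimes> inv g) ` P" using subgroup.m_closed[OF assms(1) hk(1,3)] by blast
qed

lemma conj_card:
  assumes "H \<subseteq> carrier G" "g \<in> carrier G"
  shows "card ((\<lambda>h. g \<otimes> h \<otimes> inv g) ` H) = card H"
proof (rule card_image)
  show "inj_on (\<lambda>h. g \<otimes> h \<otimes> inv g) H"
  proof (rule inj_onI)
    fix x y assume "x \<in> H" "y \<in> H" "g \<otimes> x \<otimes> inv g = g \<otimes> y \<otimes> inv g"
    then show "x = y" using conjugation_is_inj[OF assms(2)] assms(1) by blast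
  qed
qed

lemma conj_pow:
  assumes "q \<in> carrier G" "z \<in> carrier G"
  shows "((\<lambda>z. q \<otimes> z \<otimes> inv q)^^n) z = q [^] n \<otimes> z \<otimes> inv (q [^] n)"
proof (induction n)
  case 0 then show ?case using assms by simp
next
  case (Suc n)
  have "((\<lambda>z. q \<otimes> z \<otimes> inv q)^^Suc n) z = q \<otimes> (q [^] n \<otimes> z \<otimes> inv (q [^] n)) \<otimes> inv q"
    using Suc by simp
  also have "\<dots> = (q \<otimes> q [^] n) \<otimes> z \<otimes> (inv (q [^] n) \<otimes> inv q)"
    using assms by (simp add: m_assoc)
  also have "q \<otimes> q [^] n = q [^] Suc n" using assms by (simp only: nat_pow_Suc2)
  also have "inv (q [^] n) \<otimes> inv q = inv (q [^] Suc n)"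
    using assms by (simp only: nat_pow_Suc2 inv_mult_group nat_pow_closed)
  finally show ?case .
qed

lemma act_pow:
  assumes "q \<in> carrier G" "R \<subseteq> carrier G"
  shows "(cact q ^^ n) R = cact (q [^] n) R"
proof (induction n)
  case 0
  have "cact \<one> R = (\<lambda>h. \<one> \<otimes> h \<otimes> inv \<one>) ` R" by (rule conjset[OF assms(2) one_closed])
  also have "\<dots> = (\<lambda>h. h) ` R" by (rule image_cong) (use assms in auto)
  finally have "cact \<one> R = R" by simp
  then show ?case by simp
next
  case (Suc n)
  interpret GA: group_action G "{H. H \<subseteq> carrier G}" cact by (rule action_by_conjugation_on_power_set)
  have "(cact q ^^ Suc n) R = cact q ((cact q ^^ n) R)" by (simp only: funpow.simps comp_apply)
  also have "\<dots> = cact q (cact (q [^] n) R)" by (simp only: Suc.IH)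
  also have "\<dots> = cact (q \<otimes> q [^] n) R"
    using GA.composition_rule[of R q "q [^] n"] assms by simp
  also have "q \<otimes> q [^] n = q [^] Suc n" using assms by (simp only: nat_pow_Suc2)
  finally show ?case .
qed

end

context group
begin

lemma conj_self:
  assumes "subgroup P G" "p \<in> P"
  shows "(\<lambda>h. p \<otimes> h \<otimes> inv p) ` P = P"
proof
  have Pc: "P \<subseteq> carrier G" using subgroup.subset[OF assms(1)] .
  have pc: "p \<in> carrier G" using assms Pc by auto
  show "(\<lambda>h. p \<otimes> h \<otimes> inv p) ` P \<subseteq> P"
    using assms subgroup.m_closed[OF assms(1)] subgroup.m_inv_closed[OF assms(1)] by auto
  show "P \<subseteq> (\<lambda>h. p \<otimes> h \<otimes> inv p) ` P"
  proof
    fix h assume h: "h \<in> P"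
    have hc: "h \<in> carrier G" using h Pc by auto
    have "inv p \<otimes> h \<otimes> p \<in> P"
      using h assms subgroup.m_closed[OF assms(1)] subgroup.m_inv_closed[OF assms(1)] by auto
    moreover have "h = p \<otimes> (inv p \<otimes> h \<otimes> p) \<otimes> inv p"
      using pc hc by (simp add: m_assoc inv_cancel_left2)
    ultimately show "h \<in> (\<lambda>h. p \<otimes> h \<otimes> inv p) ` P" by blast
  qed
qed

lemma syl5:
  assumes fin: "finite (carrier G)" and o80: "order G = 80"
    and nn: "\<forall>P. sylow_subgroup G 5 P \<longrightarrow> \<not> P \<lhd> G"
    and sP: "subgroup P G" and cP: "card P = 5"
  shows "normalizer G P = P \<and> card (orbit G cact P) = 16"
proof -
  interpret GA: group_action G "{H. H \<subseteq> carrier G}" cact by (rule action_by_conjugation_on_power_set)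
  have Pc: "P \<subseteq> carrier G" using subgroup.subset[OF sP] .
  define Orb where "Orb = orbit G cact P"
  define N where "N = normalizer G P"
  have NS: "N = stabilizer G cact P" unfolding N_def normalizer_def by simp
  have os: "card Orb * card N = 80"
    using GA.orbit_stabilizer_theorem[of P] Pc o80 unfolding Orb_def NS by simp
  have sN: "subgroup N G" unfolding N_def using normalizer_imp_subgroup[OF Pc] .
  have PN: "P \<subseteq> N"
  proof
    fix p assume p: "p \<in> P"
    have pc: "p \<in> carrier G" using p Pc by auto
    have "cact p P = P" using conjset[OF Pc pc] conj_self[OF sP p] by simp
    then show "p \<in> N" unfolding NS stabilizer_def using pc by simp
  qed
  have fN: "finite N" using subgroup.subset[OF sN] fin finite_subset by blast
  have d5: "5 dvd card N" using sub_dvd[OF sN sP PN fN] cP by simp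
  have Omem: "\<exists>g\<in>carrier G. R = (\<lambda>h. g \<otimes> h \<otimes> inv g) ` P" if "R \<in> Orb" for R
  proof -
    have "R \<in> {cact g P | g. g \<in> carrier G}" using that unfolding Orb_def orbit_def .
    then obtain g where g: "g \<in> carrier G" "R = cact g P" by blast
    then have "R = (\<lambda>h. g \<otimes> h \<otimes> inv g) ` P" using conjset[OF Pc g(1)] by simp
    then show ?thesis using g(1) by blast
  qed
  have Osub: "subgroup R G \<and> card R = 5" if RO: "R \<in> Orb" for R
  proof -
    obtain g where g: "g \<in> carrier G" "R = (\<lambda>h. g \<otimes> h \<otimes> inv g) ` P" using Omem[OF RO] by blast
    show ?thesis using conj_subgroup[OF sP g(1)] conj_card[OF Pc g(1)] cP g(2) by simp
  qed
  have OE: "Orb \<subseteq> {H. H \<subseteq> carrier G}"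
  proof
    fix R assume "R \<in> Orb"
    then have "subgroup R G" using Osub by simp
    then show "R \<in> {H. H \<subseteq> carrier G}" using subgroup.subset by simp
  qed
  have P1: "cact \<one> P = P" using act_pow[OF one_closed Pc, of 0] by simp
  have PO: "P \<in> Orb"
  proof -
    have "P = cact \<one> P" using P1 by simp
    then show ?thesis unfolding Orb_def orbit_def using one_closed by blast
  qed
  have "finite {H. H \<subseteq> carrier G}" using fin by simp
  then have fO: "finite Orb" using OE finite_subset by blast
  have "P - {\<one>} \<noteq> {}"
  proof
    assume "P - {\<one>} = {}"
    then have "P \<subseteq> {\<one>}" by blast
    then have "card P \<le> 1" using card_mono[of "{\<one>}" P] by simp
    then show False using cP by simp
  qed
  then obtain q where q: "q \<in> P" "q \<noteq> \<one>" by blast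
  have qc: "q \<in> carrier G" using q Pc by auto
  have q5: "q [^] (5::nat) = \<one>" using sub5_pow5[OF fin sP cP q(1)] .
  have Pg: "P = generate G {q}" using sub5_gen[OF fin sP cP q] .
  define f where "f = cact q"
  define Xs where "Xs = Orb - {P}"
  have fP: "f P = P" unfolding f_def using conjset[OF Pc qc] conj_self[OF sP q(1)] by simp
  have injf: "inj_on f {H. H \<subseteq> carrier G}" unfolding f_def using GA.inj_prop[OF qc] .
  have fX: "f ` Xs \<subseteq> Xs"
  proof
    fix S assume "S \<in> f ` Xs"
    then obtain R where R: "R \<in> Orb" "R \<noteq> P" "S = f R" unfolding Xs_def by blast
    obtain g where g: "g \<in> carrier G" "R = cact g P" using R(1) unfolding Orb_def orbit_def by blast
    have "f R = cact (q \<otimes> g) P" unfolding f_def g(2) using GA.composition_rule[of P q g] Pc qc g(1) by simp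
    then have "f R \<in> Orb" unfolding Orb_def orbit_def using qc g(1) by blast
    moreover have "f R \<noteq> P"
    proof
      assume "f R = P"
      then have "f R = f P" using fP by simp
      moreover have "R \<in> {H. H \<subseteq> carrier G}" "P \<in> {H. H \<subseteq> carrier G}" using OE R(1) PO by auto
      ultimately have "R = P" using inj_onD[OF injf] by blast
      then show False using R by simp
    qed
    ultimately show "S \<in> Xs" unfolding Xs_def using R by simp
  qed
  have f5: "\<forall>R\<in>Xs. (f^^5) R = R"
  proof
    fix R assume "R \<in> Xs"
    then have Rc: "R \<subseteq> carrier G" using OE unfolding Xs_def by auto
    have "(f^^5) R = cact (q [^] (5::nat)) R" unfolding f_def using act_pow[OF qc Rc] .
    also have "\<dots> = cact \<one> R" using q5 by simp
    also have "\<dots> = R" using act_pow[OF one_closed Rc, of 0] by simp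
    finally show "(f^^5) R = R" .
  qed
  have ffix: "\<forall>R\<in>Xs. f R \<noteq> R"
  proof
    fix R assume RX: "R \<in> Xs"
    show "f R \<noteq> R"
    proof
      assume fR: "f R = R"
      have RO: "R \<in> Orb" "R \<noteq> P" using RX unfolding Xs_def by auto
      have sR: "subgroup R G" and cR: "card R = 5" using Osub[OF RO(1)] by auto
      have Rc: "R \<subseteq> carrier G" using subgroup.subset[OF sR] .
      have fR2: "(\<lambda>z. q \<otimes> z \<otimes> inv q) ` R = R" using fR conjset[OF Rc qc] unfolding f_def by simp
      define h where "h = (\<lambda>z. q \<otimes> z \<otimes> inv q)"
      define Ys where "Ys = R - {\<one>}"
      have "\<exists>z\<in>Ys. h z = z"
      proof (rule ccontr)
        assume nf: "\<not> (\<exists>z\<in>Ys. h z = z)"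
        have fY: "finite Ys" unfolding Ys_def using Rc fin finite_subset by blast
        have hY: "h ` Ys \<subseteq> Ys"
        proof
          fix w assume "w \<in> h ` Ys"
          then obtain z where z: "z \<in> R" "z \<noteq> \<one>" "w = h z" unfolding Ys_def by blast
          have zc: "z \<in> carrier G" using z Rc by auto
          have "w \<in> R" using fR2 z unfolding h_def by blast
          moreover have "w \<noteq> \<one>"
          proof
            assume "w = \<one>"
            then have "q \<otimes> z \<otimes> inv q = q \<otimes> \<one> \<otimes> inv q" using z qc unfolding h_def by simp
            then have "z = \<one>" using conjugation_is_inj[OF qc zc one_closed] by simp
            then show False using z by simp
          qed
          ultimately show "w \<in> Ys" unfolding Ys_def by simp
        qed
        have h5: "\<forall>z\<in>Ys. (h^^5) z = z"
        proof
          fix z assume "z \<in> Ys"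
          then have zc: "z \<in> carrier G" using Rc unfolding Ys_def by auto
          show "(h^^5) z = z" unfolding h_def using conj_pow[OF qc zc, of 5] q5 zc by simp
        qed
        have "5 dvd card Ys" using orb5[OF fY hY h5] nf by blast
        moreover have "card Ys = 4" unfolding Ys_def using cR subgroup.one_closed[OF sR] Rc fin
          by (simp add: card_Diff_singleton)
        ultimately show False by simp
      qed
      then obtain z where z: "z \<in> R" "z \<noteq> \<one>" "q \<otimes> z \<otimes> inv q = z" unfolding Ys_def h_def by blast
      have zc: "z \<in> carrier G" using z Rc by auto
      have cm: "q \<otimes> z = z \<otimes> q"
      proof -
        have "q \<otimes> z = q \<otimes> z \<otimes> inv q \<otimes> q" using qc zc by (simp add: m_assoc)
        also have "\<dots> = z \<otimes> q" using z(3) by simp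
        finally show ?thesis .
      qed
      have z5: "z [^] (5::nat) = \<one>" using sub5_pow5[OF fin sR cR z(1)] .
      have "z \<notin> generate G {q}"
      proof
        assume "z \<in> generate G {q}"
        then have "z \<in> P" using Pg by simp
        then have "P = generate G {z}" using sub5_gen[OF fin sP cP _ z(2)] by simp
        moreover have "R = generate G {z}" using sub5_gen[OF fin sR cR z(1,2)] .
        ultimately show False using RO by simp
      qed
      then show False using no25[OF fin o80 qc q(2) q5 zc z5 cm] by simp
    qed
  qed
  have fXX: "finite Xs" unfolding Xs_def using fO by simp
  have "5 dvd card Xs" using orb5[OF fXX fX f5 ffix] .
  moreover have "card Xs = card Orb - 1" unfolding Xs_def using PO fO by (simp add: card_Diff_singleton)
  ultimately have m1: "5 dvd card Orb - 1" by simp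
  obtain k where k: "card N = 5 * k" using d5 by (auto simp: dvd_def)
  have "card Orb * k = 16" using os k by (simp add: mult.commute)
  then have dO: "card Orb dvd 16" using dvd_triv_left[of "card Orb" k] by simp
  have n1: "card Orb \<noteq> 1"
  proof
    assume "card Orb = 1"
    then obtain x where "Orb = {x}" by (rule card_1_singletonE)
    then have O1: "Orb = {P}" using PO by simp
    have "P \<lhd> G"
    proof -
      have "\<forall>x\<in>carrier G. \<forall>h\<in>P. x \<otimes> h \<otimes> inv x \<in> P"
      proof (intro ballI)
        fix x h assume x: "x \<in> carrier G" and h: "h \<in> P"
        have "cact x P \<in> Orb" unfolding Orb_def orbit_def using x by blast
        then have "cact x P = P" using O1 by simp
        then have "(\<lambda>h. x \<otimes> h \<otimes> inv x) ` P = P" using conjset[OF Pc x] by simp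
        then show "x \<otimes> h \<otimes> inv x \<in> P" using h by blast
      qed
      then show ?thesis using normal_inv_iff sP by simp
    qed
    moreover have "sylow_subgroup G 5 P" unfolding sylow_subgroup_def using sP cP o80 mult5_80 by simp
    ultimately show False using nn by blast
  qed
  have "card Orb \<in> {1,2,4,8,16}" using divs16[OF dO] .
  then have O16: "card Orb = 16" using m1 n1 by auto
  then have "card N = 5" using os by simp
  then have "N = P" using card_subset_eq[OF fN PN] cP by simp
  then show ?thesis using O16 unfolding N_def Orb_def by simp
qed

end

context group
begin

lemma conj_elem_pow:
  assumes "g \<in> carrier G" "t \<in> carrier G"
  shows "(g \<otimes> t \<otimes> inv g) [^] (n::nat) = g \<otimes> t [^] n \<otimes> inv g"
proof (induction n)
  case 0 then show ?case using assms by simp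
next
  case (Suc n)
  have "(g \<otimes> t \<otimes> inv g) [^] Suc n = (g \<otimes> t [^] n \<otimes> inv g) \<otimes> (g \<otimes> t \<otimes> inv g)"
    using Suc by simp
  also have "\<dots> = g \<otimes> (t [^] n \<otimes> t) \<otimes> inv g" using assms by (simp add: m_assoc inv_cancel_left)
  finally show ?case by simp
qed

lemma sub16_pow:
  assumes "subgroup T G" "card T = 16" "t \<in> T"
  shows "t [^] (16::nat) = \<one>"
proof -
  have tc: "t \<in> carrier G" using subgroup.mem_carrier[OF assms(1,3)] .
  have fT: "finite T" using assms(2) card.infinite by fastforce
  have sub: "generate G {t} \<subseteq> T" using generate_subgroup_incl[of "{t}" T] assms(1,3) by simp
  have "card (generate G {t}) dvd 16"
    using sub_dvd[OF assms(1) generate_is_subgroup[of "{t}"] sub fT] tc assms(2) by simp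
  then have "ord t dvd 16" using generate_pow_card[OF tc] by simp
  then show ?thesis using pow_eq_id[OF tc] by simp
qed

lemma structure80:
  assumes fin: "finite (carrier G)" and o80: "order G = 80"
    and nn: "\<forall>P. sylow_subgroup G 5 P \<longrightarrow> \<not> P \<lhd> G"
  obtains T where "subgroup T G" "card T = 16"
    "\<forall>x\<in>carrier G - T. x \<noteq> \<one> \<and> x [^] (5::nat) = \<one>"
    "\<forall>x\<in>carrier G - T. \<forall>n\<in>T. n \<otimes> x = x \<otimes> n \<longrightarrow> n = \<one>"
    "\<forall>g\<in>carrier G. \<forall>t\<in>T. g \<otimes> t \<otimes> inv g \<in> T"
proof -
  have p5: "Factorial_Ring.prime (5::nat)" by simp
  have p2: "Factorial_Ring.prime (2::nat)" by simp
  obtain P where sP: "subgroup P G" and cP: "card P = 5"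
    using sylow_thm[OF p5 is_group, of 1 16] o80 fin by auto
  obtain T where sT: "subgroup T G" and cT: "card T = 16"
    using sylow_thm[OF p2 is_group, of 4 5] o80 fin by auto
  have Tc: "T \<subseteq> carrier G" using subgroup.subset[OF sT] .
  have fT: "finite T" using cT card.infinite by fastforce
  define Orb where "Orb = orbit G cact P"
  have Pc: "P \<subseteq> carrier G" using subgroup.subset[OF sP] .
  have cO: "card Orb = 16" using syl5[OF fin o80 nn sP cP] unfolding Orb_def by simp
  have Osub: "subgroup R G \<and> card R = 5" if RO: "R \<in> Orb" for R
  proof -
    have "R \<in> {cact g P | g. g \<in> carrier G}" using RO unfolding Orb_def orbit_def .
    then obtain g where g: "g \<in> carrier G" "R = cact g P" by blast
    then have "R = (\<lambda>h. g \<otimes> h \<otimes> inv g) ` P" using conjset[OF Pc g(1)] by simp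
    then show ?thesis using conj_subgroup[OF sP g(1)] conj_card[OF Pc g(1)] cP by simp
  qed
  have "finite {H. H \<subseteq> carrier G}" using fin by simp
  moreover have "Orb \<subseteq> {H. H \<subseteq> carrier G}"
  proof
    fix R assume "R \<in> Orb"
    then have "subgroup R G" using Osub by simp
    then show "R \<in> {H. H \<subseteq> carrier G}" using subgroup.subset by simp
  qed
  ultimately have fO: "finite Orb" using finite_subset by blast
  define U where "U = (\<Union>R\<in>Orb. R - {\<one>})"
  have cU: "card U = 64"
  proof -
    have fR: "\<forall>R\<in>Orb. finite (R - {\<one>})"
      using Osub fin subgroup.subset finite_subset by (metis finite_Diff)
    have dj: "\<forall>R\<in>Orb. \<forall>R'\<in>Orb. R \<noteq> R' \<longrightarrow> (R - {\<one>}) \<inter> (R' - {\<one>}) = {}"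
    proof (intro ballI impI)
      fix R R' assume R: "R \<in> Orb" "R' \<in> Orb" "R \<noteq> R'"
      show "(R - {\<one>}) \<inter> (R' - {\<one>}) = {}"
      proof (rule ccontr)
        assume "(R - {\<one>}) \<inter> (R' - {\<one>}) \<noteq> {}"
        then obtain z where z: "z \<in> R" "z \<in> R'" "z \<noteq> \<one>" by blast
        have "R = generate G {z}" using sub5_gen[OF fin _ _ z(1) z(3)] Osub[OF R(1)] by simp
        moreover have "R' = generate G {z}" using sub5_gen[OF fin _ _ z(2) z(3)] Osub[OF R(2)] by simp
        ultimately show False using R(3) by simp
      qed
    qed
    have c4: "card (R - {\<one>}) = 4" if "R \<in> Orb" for R
    proof -
      have "subgroup R G" "card R = 5" using Osub[OF that] by auto
      moreover then have "\<one> \<in> R" using subgroup.one_closed by blast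
      ultimately show ?thesis by (simp add: card_Diff_singleton)
    qed
    have "card U = (\<Sum>R\<in>Orb. card (R - {\<one>}))"
      unfolding U_def using card_UN_disjoint[OF fO fR dj] .
    also have "\<dots> = (\<Sum>R\<in>Orb. 4)" using c4 by simp
    also have "\<dots> = 64" using cO by simp
    finally show ?thesis .
  qed
  have Uc: "U \<subseteq> carrier G" unfolding U_def using Osub subgroup.subset by blast
  have Umem: "\<exists>R\<in>Orb. x \<in> R \<and> x \<noteq> \<one>" if "x \<in> U" for x
    using that unfolding U_def by blast
  have TU: "T \<inter> U = {}"
  proof (rule ccontr)
    assume "T \<inter> U \<noteq> {}"
    then obtain z where z: "z \<in> T" "z \<in> U" by blast
    obtain R where R: "R \<in> Orb" "z \<in> R" "z \<noteq> \<one>" using Umem[OF z(2)] by blast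
    have "z [^] (5::nat) = \<one>" using sub5_pow5[OF fin _ _ R(2)] Osub[OF R(1)] by simp
    moreover have "z [^] (16::nat) = \<one>" using sub16_pow[OF sT cT z(1)] .
    ultimately show False using pow16_5_one R(3) z Tc by blast
  qed
  have fU: "finite U" using Uc fin finite_subset by blast
  have "card (T \<union> U) = 80" using card_Un_disjoint[OF fT fU TU] cT cU by simp
  then have TUc: "T \<union> U = carrier G"
    using card_subset_eq[OF fin] Tc Uc o80 unfolding order_def by (metis Un_least)
  have out: "\<forall>x\<in>carrier G - T. \<exists>R\<in>Orb. x \<in> R \<and> x \<noteq> \<one>"
    using TUc Umem by blast
  show ?thesis
  proof (rule that[OF sT cT])
    show "\<forall>x\<in>carrier G - T. x \<noteq> \<one> \<and> x [^] (5::nat) = \<one>"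
    proof
      fix x assume x: "x \<in> carrier G - T"
      obtain R where R: "R \<in> Orb" "x \<in> R" "x \<noteq> \<one>" using out x by blast
      show "x \<noteq> \<one> \<and> x [^] (5::nat) = \<one>" using sub5_pow5[OF fin _ _ R(2)] Osub[OF R(1)] R(3) by simp
    qed
    show "\<forall>x\<in>carrier G - T. \<forall>n\<in>T. n \<otimes> x = x \<otimes> n \<longrightarrow> n = \<one>"
    proof (intro ballI impI)
      fix x n assume x: "x \<in> carrier G - T" and n: "n \<in> T" and cm: "n \<otimes> x = x \<otimes> n"
      obtain R where R: "R \<in> Orb" "x \<in> R" "x \<noteq> \<one>" using out x by blast
      have sR: "subgroup R G" and cR: "card R = 5" using Osub[OF R(1)] by auto
      have Rc: "R \<subseteq> carrier G" using subgroup.subset[OF sR] .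
      have xc: "x \<in> carrier G" and nc: "n \<in> carrier G" using x n Tc by auto
      have x5: "x [^] (5::nat) = \<one>" using sub5_pow5[OF fin sR cR R(2)] .
      have Rx: "R = (\<lambda>i. x [^] i) ` {..<(5::nat)}"
        using sub5_gen[OF fin sR cR R(2,3)] gen5(2)[OF fin xc R(3) x5] by simp
      have "(\<lambda>h. n \<otimes> h \<otimes> inv n) ` R = R"
      proof -
        have "(\<lambda>h. n \<otimes> h \<otimes> inv n) ` R = (\<lambda>i. n \<otimes> x [^] i \<otimes> inv n) ` {..<(5::nat)}"
          unfolding Rx by (simp add: image_image)
        also have "\<dots> = (\<lambda>i. x [^] i) ` {..<(5::nat)}"
        proof (rule image_cong)
          fix i :: nat
          have "x [^] i \<otimes> n = n \<otimes> x [^] i" using comm_pow1[OF xc nc] cm by simp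
          then have "n \<otimes> x [^] i \<otimes> inv n = x [^] i \<otimes> n \<otimes> inv n" by simp
          also have "\<dots> = x [^] i" using xc nc by (simp add: m_assoc)
          finally show "n \<otimes> x [^] i \<otimes> inv n = x [^] i" .
        qed simp
        finally show ?thesis using Rx by simp
      qed
      then have "cact n R = R" using conjset[OF Rc nc] by simp
      then have "n \<in> normalizer G R" unfolding normalizer_def stabilizer_def using nc by simp
      then have "n \<in> R" using syl5[OF fin o80 nn sR cR] by simp
      then have "n [^] (5::nat) = \<one>" using sub5_pow5[OF fin sR cR] by simp
      moreover have "n [^] (16::nat) = \<one>" using sub16_pow[OF sT cT n] .
      ultimately show "n = \<one>" using pow16_5_one nc by blast
    qed
    show "\<forall>g\<in>carrier G. \<forall>t\<in>T. g \<otimes> t \<otimes> inv g \<in> T"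
    proof (intro ballI)
      fix g t assume g: "g \<in> carrier G" and t: "t \<in> T"
      have tc: "t \<in> carrier G" using t Tc by auto
      have wc: "g \<otimes> t \<otimes> inv g \<in> carrier G" using g tc by simp
      have "(g \<otimes> t \<otimes> inv g) [^] (16::nat) = \<one>"
        using conj_elem_pow[OF g tc] sub16_pow[OF sT cT t] g by simp
      show "g \<otimes> t \<otimes> inv g \<in> T"
      proof (rule ccontr)
        assume nT: "g \<otimes> t \<otimes> inv g \<notin> T"
        obtain R where R: "R \<in> Orb" "g \<otimes> t \<otimes> inv g \<in> R" "g \<otimes> t \<otimes> inv g \<noteq> \<one>" using out wc nT by blast
        have "(g \<otimes> t \<otimes> inv g) [^] (5::nat) = \<one>" using sub5_pow5[OF fin _ _ R(2)] Osub[OF R(1)] by simp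
        then show False using pow16_5_one[OF wc] \<open>(g \<otimes> t \<otimes> inv g) [^] (16::nat) = \<one>\<close> R(3) by blast
      qed
    qed
  qed
qed

end

locale G80s = group +
  fixes T a
  assumes fin: "finite (carrier G)" and o80: "order G = 80"
    and sT: "subgroup T G" and cT: "card T = 16"
    and outT: "\<forall>x\<in>carrier G - T. x \<noteq> \<one> \<and> x [^] (5::nat) = \<one>"
    and fpfT: "\<forall>x\<in>carrier G - T. \<forall>n\<in>T. n \<otimes> x = x \<otimes> n \<longrightarrow> n = \<one>"
    and nrm: "\<forall>g\<in>carrier G. \<forall>t\<in>T. g \<otimes> t \<otimes> inv g \<in> T"
    and aG: "a \<in> carrier G" and aT: "a \<notin> T"
begin

lemma Tc: "T \<subseteq> carrier G" using subgroup.subset[OF sT] .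
lemma fT: "finite T" using cT card.infinite by fastforce
lemma a5: "a [^] (5::nat) = \<one>" using outT aG aT by blast
lemma a1: "a \<noteq> \<one>" using outT aG aT by blast

definition sig where "sig t = a \<otimes> t \<otimes> inv a"

lemma sigT: "t \<in> T \<Longrightarrow> sig t \<in> T" unfolding sig_def using nrm aG by blast

lemma sig_fix: "t \<in> T \<Longrightarrow> sig t = t \<Longrightarrow> t = \<one>"
proof -
  assume t: "t \<in> T" "sig t = t"
  have tc: "t \<in> carrier G" using t Tc by auto
  have "t \<otimes> a = a \<otimes> t \<otimes> inv a \<otimes> a" using t unfolding sig_def by simp
  also have "\<dots> = a \<otimes> t" using aG tc by (simp add: m_assoc)
  finally show "t = \<one>" using fpfT aG aT t(1) by blast
qed

lemma sig_pow: "t \<in> carrier G \<Longrightarrow> (sig^^n) t = a [^] n \<otimes> t \<otimes> inv (a [^] n)"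
  using conj_pow[OF aG, of t n] unfolding sig_def by (simp add: fun_eq_iff)

lemma sig5: "t \<in> carrier G \<Longrightarrow> (sig^^5) t = t"
  using sig_pow[of t 5] a5 by simp

lemma sig_ne1: "t \<in> carrier G \<Longrightarrow> t \<noteq> \<one> \<Longrightarrow> sig t \<noteq> \<one>"
  unfolding sig_def using aG conjugation_is_inj[OF aG, of t \<one>] by auto

lemma L_inv:
  assumes sH: "subgroup H G" and HT: "H \<subseteq> T" and sH2: "\<forall>h\<in>H. sig h \<in> H"
  shows "H = {\<one>} \<or> H = T"
proof -
  have fH: "finite H" using HT fT finite_subset by blast
  define Hs where "Hs = H - {\<one>}"
  have "5 dvd card Hs"
  proof (rule orb5)
    show "finite Hs" unfolding Hs_def using fH by simp
    show "sig ` Hs \<subseteq> Hs" unfolding Hs_def using sH2 sig_ne1 HT Tc by auto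
    show "\<forall>x\<in>Hs. (sig^^5) x = x" unfolding Hs_def using sig5 HT Tc by auto
    show "\<forall>x\<in>Hs. sig x \<noteq> x" unfolding Hs_def using sig_fix HT by auto
  qed
  moreover have "card Hs = card H - 1" unfolding Hs_def using subgroup.one_closed[OF sH]
    by (simp add: card_Diff_singleton)
  ultimately have m: "5 dvd card H - 1" by simp
  have "card H dvd 80" using sub_dvd_order[OF sH fin] o80 by simp
  moreover have "card H \<le> 16" using card_mono[OF fT HT] cT by simp
  moreover have "card H \<noteq> 0" using subgroup.one_closed[OF sH] fH by auto
  ultimately have "card H = 1 \<or> card H = 16" using m small_cases16[of "card H"] by auto
  then show ?thesis
  proof
    assume "card H = 1"
    then obtain x where "H = {x}" by (rule card_1_singletonE)
    then show ?thesis using subgroup.one_closed[OF sH] by simp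
  next
    assume "card H = 16"
    then show ?thesis using card_subset_eq[OF fT HT] cT by simp
  qed
qed

end

context G80s
begin

lemma exists_central: "\<exists>z\<in>T. z \<noteq> \<one> \<and> (\<forall>t\<in>T. z \<otimes> t = t \<otimes> z)"
proof (rule ccontr)
  assume nc: "\<not> (\<exists>z\<in>T. z \<noteq> \<one> \<and> (\<forall>t\<in>T. z \<otimes> t = t \<otimes> z))"
  interpret GA: group_action G "carrier G" "\<lambda>g. \<lambda>h\<in>carrier G. g \<otimes> h \<otimes> inv g"
    by (rule action_by_conjugation)
  define Cl where "Cl t = {g \<otimes> t \<otimes> inv g | g. g \<in> carrier G}" for t
  have c10: "card (Cl t) = 10" if t: "t \<in> T" "t \<noteq> \<one>" for t
  proof -
    have tc: "t \<in> carrier G" using t Tc by auto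
    define Cen where "Cen = stabilizer G (\<lambda>g. \<lambda>h\<in>carrier G. g \<otimes> h \<otimes> inv g) t"
    have orb: "orbit G (\<lambda>g. \<lambda>h\<in>carrier G. g \<otimes> h \<otimes> inv g) t = Cl t"
      unfolding orbit_def Cl_def using tc by simp
    have os: "card (Cl t) * card Cen = 80"
      using GA.orbit_stabilizer_theorem[OF tc] orb o80 unfolding Cen_def by simp
    have sC: "subgroup Cen G" unfolding Cen_def using GA.stabilizer_subgroup[OF tc] .
    have CenT: "Cen \<subseteq> T"
    proof
      fix g assume g: "g \<in> Cen"
      then have gc: "g \<in> carrier G" and e: "g \<otimes> t \<otimes> inv g = t"
        unfolding Cen_def stabilizer_def using tc by auto
      have "t \<otimes> g = g \<otimes> t \<otimes> inv g \<otimes> g" using e by simp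
      also have "\<dots> = g \<otimes> t" using gc tc by (simp add: m_assoc)
      finally have cm: "t \<otimes> g = g \<otimes> t" .
      show "g \<in> T"
      proof (rule ccontr)
        assume "g \<notin> T"
        then show False using fpfT gc t cm by blast
      qed
    qed
    have ClT: "Cl t \<subseteq> T - {\<one>}"
    proof
      fix s assume "s \<in> Cl t"
      then obtain g where g: "g \<in> carrier G" "s = g \<otimes> t \<otimes> inv g" unfolding Cl_def by blast
      have "s \<in> T" using nrm g t by blast
      moreover have "s \<noteq> \<one>" using conjugation_is_inj[OF g(1) tc one_closed] g t by auto
      ultimately show "s \<in> T - {\<one>}" by simp
    qed
    have "card (Cl t) \<le> card (T - {\<one>})" by (rule card_mono[OF _ ClT]) (use fT in simp)
    also have "\<dots> = 15" using cT subgroup.one_closed[OF sT] by (simp add: card_Diff_singleton)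
    finally have le: "card (Cl t) \<le> 15" .
    have "card Cen dvd 16" using sub_dvd[OF sT sC CenT fT] cT by simp
    then have "card Cen \<in> {1,2,4,8,16}" by (rule divs16)
    moreover have "card Cen \<noteq> 16"
    proof
      assume "card Cen = 16"
      then have "Cen = T" using card_subset_eq[OF fT CenT] cT by simp
      then have "\<forall>g\<in>T. g \<otimes> t \<otimes> inv g = t" unfolding Cen_def stabilizer_def using tc by auto
      then have "\<forall>g\<in>T. t \<otimes> g = g \<otimes> t"
      proof (intro ballI)
        fix g assume g: "g \<in> T" and h: "\<forall>g\<in>T. g \<otimes> t \<otimes> inv g = t"
        have gc: "g \<in> carrier G" using g Tc by auto
        have "t \<otimes> g = g \<otimes> t \<otimes> inv g \<otimes> g" using h g by simp
        also have "\<dots> = g \<otimes> t" using gc tc by (simp add: m_assoc)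
        finally show "t \<otimes> g = g \<otimes> t" .
      qed
      then show False using nc t by blast
    qed
    ultimately have "card Cen = 1 \<or> card Cen = 2 \<or> card Cen = 4 \<or> card Cen = 8" by blast
    then show "card (Cl t) = 10"
    proof (elim disjE)
      assume "card Cen = 1" then show ?thesis using os le by simp
    next
      assume "card Cen = 2" then show ?thesis using os le by simp
    next
      assume "card Cen = 4" then show ?thesis using os le by simp
    next
      assume "card Cen = 8" then show ?thesis using os le by simp
    qed
  qed
  have cl_disj: "Cl t1 \<inter> Cl t2 = {}" if "t1 \<in> carrier G" "t2 \<in> carrier G" "t2 \<notin> Cl t1" for t1 t2
  proof (rule ccontr)
    assume "Cl t1 \<inter> Cl t2 \<noteq> {}"
    then obtain g h where gh: "g \<in> carrier G" "h \<in> carrier G" "g \<otimes> t1 \<otimes> inv g = h \<otimes> t2 \<otimes> inv h"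
      unfolding Cl_def by blast
    have "t2 = inv h \<otimes> (h \<otimes> t2 \<otimes> inv h) \<otimes> h" using gh that by (simp add: m_assoc inv_cancel_left)
    also have "\<dots> = inv h \<otimes> (g \<otimes> t1 \<otimes> inv g) \<otimes> h" using gh by simp
    also have "\<dots> = (inv h \<otimes> g) \<otimes> t1 \<otimes> inv (inv h \<otimes> g)"
      using gh(1,2) that(1) by (simp add: m_assoc inv_mult_group)
    finally have "t2 \<in> Cl t1" unfolding Cl_def using gh by blast
    then show False using that by simp
  qed
  have "T - {\<one>} \<noteq> {}"
  proof
    assume "T - {\<one>} = {}"
    then have "T \<subseteq> {\<one>}" by blast
    then show False using card_mono[of "{\<one>}" T] cT by simp
  qed
  then obtain t1 where t1: "t1 \<in> T" "t1 \<noteq> \<one>" by blast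
  have Cl1: "Cl t1 \<subseteq> T - {\<one>}"
  proof
    fix s assume "s \<in> Cl t1"
    then obtain g where g: "g \<in> carrier G" "s = g \<otimes> t1 \<otimes> inv g" unfolding Cl_def by blast
    have "s \<in> T" using nrm g t1 by blast
    moreover have "s \<noteq> \<one>" using conjugation_is_inj[OF g(1) _ one_closed, of t1] g t1 Tc by auto
    ultimately show "s \<in> T - {\<one>}" by simp
  qed
  have c15: "card (T - {\<one>}) = 15" using cT subgroup.one_closed[OF sT] by (simp add: card_Diff_singleton)
  have "T - {\<one>} - Cl t1 \<noteq> {}"
  proof
    assume "T - {\<one>} - Cl t1 = {}"
    then have "T - {\<one>} = Cl t1" using Cl1 by blast
    then show False using c10[OF t1] c15 by simp
  qed
  then obtain t2 where t2: "t2 \<in> T" "t2 \<noteq> \<one>" "t2 \<notin> Cl t1" by blast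
  have Cl2: "Cl t2 \<subseteq> T - {\<one>}"
  proof
    fix s assume "s \<in> Cl t2"
    then obtain g where g: "g \<in> carrier G" "s = g \<otimes> t2 \<otimes> inv g" unfolding Cl_def by blast
    have "s \<in> T" using nrm g t2 by blast
    moreover have "s \<noteq> \<one>" using conjugation_is_inj[OF g(1) _ one_closed, of t2] g t2 Tc by auto
    ultimately show "s \<in> T - {\<one>}" by simp
  qed
  have dj: "Cl t1 \<inter> Cl t2 = {}" using cl_disj t1 t2 Tc by auto
  have fin12: "finite (Cl t1)" "finite (Cl t2)" using Cl1 Cl2 fT finite_subset by blast+
  have "card (Cl t1 \<union> Cl t2) = 20" using card_Un_disjoint[OF fin12 dj] c10 t1 t2 by simp
  moreover have "card (Cl t1 \<union> Cl t2) \<le> 15" using card_mono[of "T - {\<one>}" "Cl t1 \<union> Cl t2"] Cl1 Cl2 fT c15 by simp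
  ultimately show False by simp
qed

lemma T_abelian: "\<forall>s\<in>T. \<forall>t\<in>T. s \<otimes> t = t \<otimes> s"
proof -
  define Z where "Z = {z\<in>T. \<forall>t\<in>T. z \<otimes> t = t \<otimes> z}"
  have ZT: "Z \<subseteq> T" unfolding Z_def by auto
  have sZ: "subgroup Z G"
  proof (rule subgroupI)
    show "Z \<subseteq> carrier G" using ZT Tc by auto
    have "\<one> \<in> Z" unfolding Z_def using subgroup.one_closed[OF sT] Tc by auto
    then show "Z \<noteq> {}" by blast
  next
    fix z assume z: "z \<in> Z"
    have zc: "z \<in> carrier G" using z ZT Tc by auto
    have "\<forall>t\<in>T. inv z \<otimes> t = t \<otimes> inv z"
    proof
      fix t assume t: "t \<in> T"
      have tc: "t \<in> carrier G" using t Tc by auto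
      have e: "z \<otimes> t = t \<otimes> z" using z t unfolding Z_def by auto
      have "inv z \<otimes> t = inv z \<otimes> (t \<otimes> z) \<otimes> inv z" using zc tc by (simp add: m_assoc)
      also have "\<dots> = inv z \<otimes> (z \<otimes> t) \<otimes> inv z" using e by simp
      also have "\<dots> = t \<otimes> inv z" using zc tc by (simp add: m_assoc[symmetric])
      finally show "inv z \<otimes> t = t \<otimes> inv z" .
    qed
    then show "inv z \<in> Z" unfolding Z_def using z subgroup.m_inv_closed[OF sT] ZT by auto
  next
    fix y z assume y: "y \<in> Z" and z: "z \<in> Z"
    have yc: "y \<in> carrier G" and zc: "z \<in> carrier G" using y z ZT Tc by auto
    have "\<forall>t\<in>T. y \<otimes> z \<otimes> t = t \<otimes> (y \<otimes> z)"
    proof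
      fix t assume t: "t \<in> T"
      have tc: "t \<in> carrier G" using t Tc by auto
      have ey: "y \<otimes> t = t \<otimes> y" and ez: "z \<otimes> t = t \<otimes> z" using y z t unfolding Z_def by auto
      have "y \<otimes> z \<otimes> t = y \<otimes> (z \<otimes> t)" using yc zc tc by (simp add: m_assoc)
      also have "\<dots> = (y \<otimes> t) \<otimes> z" using ez yc zc tc by (simp add: m_assoc)
      also have "\<dots> = t \<otimes> (y \<otimes> z)" using ey yc zc tc by (simp add: m_assoc)
      finally show "y \<otimes> z \<otimes> t = t \<otimes> (y \<otimes> z)" .
    qed
    then show "y \<otimes> z \<in> Z" unfolding Z_def using y z subgroup.m_closed[OF sT] ZT by auto
  qed
  have sigZ: "\<forall>z\<in>Z. sig z \<in> Z"
  proof
    fix z assume z: "z \<in> Z"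
    have zc: "z \<in> carrier G" using z ZT Tc by auto
    have "\<forall>t\<in>T. sig z \<otimes> t = t \<otimes> sig z"
    proof
      fix t assume t: "t \<in> T"
      have tc: "t \<in> carrier G" using t Tc by auto
      define s where "s = inv a \<otimes> t \<otimes> a"
      have sT': "s \<in> T" unfolding s_def using nrm[rule_format, of "inv a" t] aG t by simp
      have sc: "s \<in> carrier G" using sT' Tc by auto
      have ts: "t = a \<otimes> s \<otimes> inv a" unfolding s_def using aG tc by (simp add: m_assoc inv_cancel_left2)
      have es: "z \<otimes> s = s \<otimes> z" using z sT' unfolding Z_def by auto
      have "sig z \<otimes> t = a \<otimes> (z \<otimes> s) \<otimes> inv a" unfolding sig_def ts using aG zc sc
        by (simp add: m_assoc inv_cancel_left)
      also have "\<dots> = a \<otimes> (s \<otimes> z) \<otimes> inv a" using es by simp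
      also have "\<dots> = t \<otimes> sig z" unfolding sig_def ts using aG zc sc
        by (simp add: m_assoc inv_cancel_left)
      finally show "sig z \<otimes> t = t \<otimes> sig z" .
    qed
    then show "sig z \<in> Z" unfolding Z_def using sigT z ZT by auto
  qed
  obtain z where z: "z \<in> T" "z \<noteq> \<one>" "\<forall>t\<in>T. z \<otimes> t = t \<otimes> z" using exists_central by blast
  have "z \<in> Z" unfolding Z_def using z by simp
  then have "Z \<noteq> {\<one>}" using z by auto
  then have "Z = T" using L_inv[OF sZ ZT sigZ] by simp
  then show ?thesis unfolding Z_def by blast
qed

end

type_synonym V = "bool \<times> bool \<times> bool \<times> bool"

fun xorV :: "V \<Rightarrow> V \<Rightarrow> V" where
  "xorV (a0,a1,a2,a3) (b0,b1,b2,b3) = (a0 \<noteq> b0, a1 \<noteq> b1, a2 \<noteq> b2, a3 \<noteq> b3)"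

fun Mv :: "V \<Rightarrow> V" where
  "Mv (w0,w1,w2,w3) = (w3, w0 \<noteq> w3, w1 \<noteq> w3, w2 \<noteq> w3)"

definition zV :: V where "zV = (False, False, False, False)"
definition e1V :: V where "e1V = (True, False, False, False)"

definition mulC :: "V \<times> nat \<Rightarrow> V \<times> nat \<Rightarrow> V \<times> nat" where
  "mulC c d = (xorV (fst c) ((Mv^^(snd c)) (fst d)), (snd c + snd d) mod 5)"


lemma xorV_self: "xorV w w = (False, False, False, False)" by (cases w) auto

lemma card_V: "card (UNIV :: V set) = 16"
  by (simp add: UNIV_Times_UNIV[symmetric] card_cartesian_product del: UNIV_Times_UNIV)

context G80s
begin

lemma T_elem: "\<forall>t\<in>T. t \<otimes> t = \<one>"
proof -
  define K where "K = {t\<in>T. t \<otimes> t = \<one>}"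
  have KT: "K \<subseteq> T" unfolding K_def by auto
  have ab: "s \<otimes> t = t \<otimes> s" if "s \<in> T" "t \<in> T" for s t using T_abelian that by blast
  have sK: "subgroup K G"
  proof (rule subgroupI)
    show "K \<subseteq> carrier G" using KT Tc by auto
    have "\<one> \<in> K" unfolding K_def using subgroup.one_closed[OF sT] by simp
    then show "K \<noteq> {}" by blast
  next
    fix t assume t: "t \<in> K"
    have tc: "t \<in> carrier G" using t KT Tc by auto
    have "inv t = t" using inv_equality[of t t] t tc unfolding K_def by simp
    then show "inv t \<in> K" using t by simp
  next
    fix s t assume s: "s \<in> K" and t: "t \<in> K"
    have sc: "s \<in> carrier G" and tc: "t \<in> carrier G" using s t KT Tc by auto
    have "s \<otimes> t \<otimes> (s \<otimes> t) = s \<otimes> (t \<otimes> s) \<otimes> t" using sc tc by (simp add: m_assoc)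
    also have "\<dots> = s \<otimes> (s \<otimes> t) \<otimes> t"
    proof -
      have tsT: "t \<in> T" "s \<in> T" using s t KT by auto
      have "t \<otimes> s = s \<otimes> t" using ab[OF tsT] .
      then show ?thesis by simp
    qed
    also have "\<dots> = (s \<otimes> s) \<otimes> (t \<otimes> t)" using sc tc by (simp add: m_assoc)
    also have "\<dots> = \<one>" using s t unfolding K_def by simp
    finally show "s \<otimes> t \<in> K" unfolding K_def using s t subgroup.m_closed[OF sT] KT by auto
  qed
  have sigK: "\<forall>t\<in>K. sig t \<in> K"
  proof
    fix t assume t: "t \<in> K"
    have tc: "t \<in> carrier G" using t KT Tc by auto
    have "sig t \<otimes> sig t = a \<otimes> (t \<otimes> t) \<otimes> inv a" unfolding sig_def using aG tc
      by (simp add: m_assoc inv_cancel_left)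
    also have "\<dots> = \<one>" using t aG unfolding K_def by simp
    finally show "sig t \<in> K" unfolding K_def using sigT t KT by auto
  qed
  have "T - {\<one>} \<noteq> {}"
  proof
    assume "T - {\<one>} = {}"
    then have "T \<subseteq> {\<one>}" by blast
    then show False using card_mono[of "{\<one>}" T] cT by simp
  qed
  then obtain t where t: "t \<in> T" "t \<noteq> \<one>" by blast
  have tc: "t \<in> carrier G" using t Tc by auto
  have "ord t dvd 16" using pow_eq_id[OF tc] sub16_pow[OF sT cT t(1)] by simp
  then have "ord t \<in> {1,2,4,8,16}" by (rule divs16)
  moreover have "ord t \<noteq> 1" using ord_eq_1[OF tc] t by simp
  ultimately have ev: "ord t div 2 + ord t div 2 = ord t" "0 < ord t div 2" "ord t div 2 < ord t" by auto
  define u where "u = t [^] (ord t div 2)"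
  have uT: "u \<in> T" unfolding u_def using pow_in_subgroup[OF sT t(1)] .
  have "u \<otimes> u = t [^] (ord t)" unfolding u_def using tc nat_pow_mult ev(1) by metis
  then have uu: "u \<otimes> u = \<one>" using pow_ord_eq_1[OF tc] by simp
  have u1: "u \<noteq> \<one>"
  proof
    assume "u = \<one>"
    then have "ord t dvd ord t div 2" using pow_eq_id[OF tc] unfolding u_def by simp
    then show False using ev dvd_imp_le by fastforce
  qed
  have "u \<in> K" unfolding K_def using uT uu by simp
  then have "K \<noteq> {\<one>}" using u1 by auto
  then have "K = T" using L_inv[OF sK KT sigK] by simp
  then show ?thesis unfolding K_def by blast
qed

lemma sig_mult: "x \<in> carrier G \<Longrightarrow> y \<in> carrier G \<Longrightarrow> sig (x \<otimes> y) = sig x \<otimes> sig y"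
  unfolding sig_def using aG by (simp add: m_assoc inv_cancel_left)

lemma sig_one: "sig \<one> = \<one>"
  unfolding sig_def using aG by simp

lemma swap_mid:
  assumes "x \<in> T" "y \<in> T" "z \<in> T" "w \<in> T"
  shows "(x \<otimes> y) \<otimes> (z \<otimes> w) = (x \<otimes> z) \<otimes> (y \<otimes> w)"
proof -
  have c: "x \<in> carrier G" "y \<in> carrier G" "z \<in> carrier G" "w \<in> carrier G" using assms Tc by auto
  have "(x \<otimes> y) \<otimes> (z \<otimes> w) = x \<otimes> (y \<otimes> z) \<otimes> w" using c by (simp add: m_assoc)
  also have "\<dots> = x \<otimes> (z \<otimes> y) \<otimes> w" using T_abelian assms by simp
  also have "\<dots> = (x \<otimes> z) \<otimes> (y \<otimes> w)" using c by (simp add: m_assoc)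
  finally show ?thesis .
qed

end

locale G80n = G80s +
  fixes n
  assumes nT: "n \<in> T" and n1: "n \<noteq> \<one>"
begin

definition pw :: "bool \<Rightarrow> 'a \<Rightarrow> 'a" where "pw b x = (if b then x else \<one>)"

definition E :: "V \<Rightarrow> 'a" where
  "E v = (case v of (b0, b1, b2, b3) \<Rightarrow>
     pw b0 n \<otimes> pw b1 (sig n) \<otimes> pw b2 (sig (sig n)) \<otimes> pw b3 (sig (sig (sig n))))"

lemma sigs: "n \<in> T" "sig n \<in> T" "sig (sig n) \<in> T" "sig (sig (sig n)) \<in> T" "sig (sig (sig (sig n))) \<in> T"
  using nT sigT by auto

lemma pwT: "x \<in> T \<Longrightarrow> pw b x \<in> T" unfolding pw_def using subgroup.one_closed[OF sT] by simp

lemma pw_mult: "x \<in> T \<Longrightarrow> pw b x \<otimes> pw c x = pw (b \<noteq> c) x"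
  unfolding pw_def using T_elem Tc by (cases b; cases c) auto

lemma ET: "E v \<in> T"
  unfolding E_def using pwT sigs subgroup.m_closed[OF sT] by (cases v) auto

lemma prod4:
  assumes "x0 \<in> T" "x1 \<in> T" "x2 \<in> T" "x3 \<in> T" "y0 \<in> T" "y1 \<in> T" "y2 \<in> T" "y3 \<in> T"
  shows "(x0 \<otimes> x1 \<otimes> x2 \<otimes> x3) \<otimes> (y0 \<otimes> y1 \<otimes> y2 \<otimes> y3)
       = (x0 \<otimes> y0) \<otimes> (x1 \<otimes> y1) \<otimes> (x2 \<otimes> y2) \<otimes> (x3 \<otimes> y3)"
proof -
  have m: "\<And>x y. x \<in> T \<Longrightarrow> y \<in> T \<Longrightarrow> x \<otimes> y \<in> T" using subgroup.m_closed[OF sT] by blast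
  have A: "(x0 \<otimes> x1) \<otimes> (y0 \<otimes> y1) = (x0 \<otimes> y0) \<otimes> (x1 \<otimes> y1)"
    using swap_mid assms by blast
  have B: "(x0 \<otimes> x1 \<otimes> x2) \<otimes> (y0 \<otimes> y1 \<otimes> y2) = ((x0 \<otimes> x1) \<otimes> (y0 \<otimes> y1)) \<otimes> (x2 \<otimes> y2)"
    using swap_mid[of "x0 \<otimes> x1" x2 "y0 \<otimes> y1" y2] assms m by blast
  have C: "(x0 \<otimes> x1 \<otimes> x2 \<otimes> x3) \<otimes> (y0 \<otimes> y1 \<otimes> y2 \<otimes> y3) = ((x0 \<otimes> x1 \<otimes> x2) \<otimes> (y0 \<otimes> y1 \<otimes> y2)) \<otimes> (x3 \<otimes> y3)"
    using swap_mid[of "x0 \<otimes> x1 \<otimes> x2" x3 "y0 \<otimes> y1 \<otimes> y2" y3] assms m by blast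
  show ?thesis using A B C by simp
qed

lemma E_mult: "E v \<otimes> E w = E (xorV v w)"
proof -
  obtain a0 a1 a2 a3 where v: "v = (a0, a1, a2, a3)" by (cases v) auto
  obtain b0 b1 b2 b3 where w: "w = (b0, b1, b2, b3)" by (cases w) auto
  have p: "\<And>b x. x \<in> T \<Longrightarrow> pw b x \<in> T" using pwT by simp
  show ?thesis unfolding E_def v w xorV.simps
    using prod4[OF p p p p p p p p, OF sigs(1-4) sigs(1-4)] pw_mult sigs by simp
qed

lemma Tcar: "x \<in> T \<Longrightarrow> x \<in> carrier G" using Tc by auto

lemma sig_pw: "x \<in> carrier G \<Longrightarrow> sig (pw b x) = pw b (sig x)"
  unfolding pw_def using sig_one by simp

lemma inv_T: "x \<in> T \<Longrightarrow> inv x = x"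
  using inv_equality[of x x] T_elem Tcar by blast

lemma sig4: "sig (sig (sig (sig n))) = n \<otimes> sig n \<otimes> sig (sig n) \<otimes> sig (sig (sig n))"
proof -
  let ?x0 = n and ?x1 = "sig n" and ?x2 = "sig (sig n)" and ?x3 = "sig (sig (sig n))"
    and ?x4 = "sig (sig (sig (sig n)))"
  have c: "?x0 \<in> carrier G" "?x1 \<in> carrier G" "?x2 \<in> carrier G" "?x3 \<in> carrier G" "?x4 \<in> carrier G"
    using sigs Tcar by auto
  define Q where "Q = ?x1 \<otimes> ?x2 \<otimes> ?x3 \<otimes> ?x4"
  have m: "\<And>x y. x \<in> T \<Longrightarrow> y \<in> T \<Longrightarrow> x \<otimes> y \<in> T" using subgroup.m_closed[OF sT] by blast
  have QT: "Q \<in> T" unfolding Q_def using sigs m by simp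
  define P where "P = ?x0 \<otimes> Q"
  have PT: "P \<in> T" unfolding P_def using QT sigs m by simp
  have s5: "sig ?x4 = n" using sig5[OF Tcar[OF nT]] by (simp add: numeral_eq_Suc)
  have "sig P = ?x1 \<otimes> (?x2 \<otimes> (?x3 \<otimes> (?x4 \<otimes> n)))"
    unfolding P_def Q_def using c s5 by (simp add: sig_mult m_assoc)
  also have "\<dots> = Q \<otimes> n" unfolding Q_def using c s5 by (simp add: m_assoc)
  also have "\<dots> = P" unfolding P_def using T_abelian QT nT by simp
  finally have "P = \<one>" using sig_fix[OF PT] by simp
  then have "(?x0 \<otimes> ?x1 \<otimes> ?x2 \<otimes> ?x3) \<otimes> ?x4 = \<one>" unfolding P_def Q_def using c by (simp add: m_assoc)
  then have "?x4 \<otimes> (?x0 \<otimes> ?x1 \<otimes> ?x2 \<otimes> ?x3) = \<one>" by (rule inv_comm) (use c in simp_all)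
  then have "inv (?x0 \<otimes> ?x1 \<otimes> ?x2 \<otimes> ?x3) = ?x4" by (rule inv_equality) (use c in simp_all)
  moreover have "?x0 \<otimes> ?x1 \<otimes> ?x2 \<otimes> ?x3 \<in> T" using sigs m by simp
  ultimately show ?thesis using inv_T by simp
qed

lemma pw_E: "pw b (E u) = E (if b then u else (False, False, False, False))"
  unfolding pw_def E_def by (simp add: pw_def)

lemma sig_E: "sig (E v) = E (Mv v)"
proof -
  obtain b0 b1 b2 b3 where v: "v = (b0, b1, b2, b3)" by (cases v) auto
  have c: "n \<in> carrier G" "sig n \<in> carrier G" "sig (sig n) \<in> carrier G" "sig (sig (sig n)) \<in> carrier G"
    using sigs Tcar by auto
  have pc: "\<And>b x. x \<in> carrier G \<Longrightarrow> pw b x \<in> carrier G" unfolding pw_def by simp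
  have "sig (E v) = pw b0 (sig n) \<otimes> pw b1 (sig (sig n)) \<otimes> pw b2 (sig (sig (sig n))) \<otimes> pw b3 (sig (sig (sig (sig n))))"
    unfolding E_def v using c pc by (simp add: sig_mult sig_pw)
  also have "\<dots> = E (False, b0, b1, b2) \<otimes> pw b3 (E (True, True, True, True))"
    unfolding E_def using sig4 c pc by (simp add: pw_def)
  also have "\<dots> = E (Mv v)" unfolding pw_E v using E_mult by (cases b3) simp_all
  finally show ?thesis .
qed

lemma a_E: "a [^] (k::nat) \<otimes> E w = E ((Mv^^k) w) \<otimes> a [^] k"
proof (induction k arbitrary: w)
  case 0 then show ?case using ET Tcar by simp
next
  case (Suc k)
  have ec: "E u \<in> carrier G" for u using ET Tcar by simp
  have s2: "a [^] Suc k = a \<otimes> a [^] k" by (rule nat_pow_Suc2[OF aG])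
  have "a [^] Suc k \<otimes> E w = a \<otimes> (a [^] k \<otimes> E w)" unfolding s2 using aG ec by (simp add: m_assoc)
  also have "\<dots> = a \<otimes> E ((Mv^^k) w) \<otimes> a [^] k" using Suc aG ec by (simp add: m_assoc)
  also have "a \<otimes> E ((Mv^^k) w) = sig (E ((Mv^^k) w)) \<otimes> a" unfolding sig_def using aG ec by (simp add: m_assoc)
  also have "sig (E ((Mv^^k) w)) = E ((Mv^^Suc k) w)" using sig_E by simp
  finally show ?case unfolding s2 using aG ec by (simp add: m_assoc)
qed

definition phi :: "V \<times> nat \<Rightarrow> 'a" where "phi c = E (fst c) \<otimes> a [^] snd c"

lemma phi_carrier: "phi c \<in> carrier G" unfolding phi_def using ET Tcar aG by simp

lemma phi_mult: "phi (mulC c d) = phi c \<otimes> phi d"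
proof -
  obtain v k where c: "c = (v, k)" by (cases c)
  obtain w l where d: "d = (w, l)" by (cases d)
  have ec: "E u \<in> carrier G" for u using ET Tcar by simp
  have "phi c \<otimes> phi d = E v \<otimes> (a [^] k \<otimes> E w) \<otimes> a [^] l"
    unfolding phi_def c d using ec aG by (simp add: m_assoc)
  also have "\<dots> = E v \<otimes> E ((Mv^^k) w) \<otimes> (a [^] k \<otimes> a [^] l)"
    unfolding a_E using ec aG by (simp add: m_assoc)
  also have "\<dots> = E (xorV v ((Mv^^k) w)) \<otimes> a [^] ((k + l) mod 5)"
    using E_mult aG nat_pow_mult pow_mod_ord5[OF aG a5] by simp
  also have "\<dots> = phi (mulC c d)" unfolding phi_def mulC_def c d by simp
  finally show ?thesis by simp
qed

lemma E0: "E (False, False, False, False) = \<one>" unfolding E_def pw_def by simp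
lemma E1: "E e1V = n" unfolding E_def pw_def e1V_def using Tcar[OF nT] by simp

lemma E_range: "range E = T"
proof -
  have sub: "subgroup (range E) G"
  proof (rule subgroupI)
    show "range E \<subseteq> carrier G" using ET Tcar by auto
    show "range E \<noteq> {}" by simp
  next
    fix x assume "x \<in> range E"
    then show "inv x \<in> range E" using inv_T ET by auto
  next
    fix x y assume "x \<in> range E" "y \<in> range E"
    then show "x \<otimes> y \<in> range E" using E_mult by auto
  qed
  have RT: "range E \<subseteq> T" using ET by auto
  have sR: "\<forall>h\<in>range E. sig h \<in> range E" using sig_E by auto
  have "n \<in> range E" using E1 by (metis rangeI)
  then have "range E \<noteq> {\<one>}" using n1 by auto
  then show ?thesis using L_inv[OF sub RT sR] by simp
qed

lemma E_inj: "inj E"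
proof -
  have "card (range E) = card (UNIV :: V set)" using E_range cT card_V by simp
  then show ?thesis using inj_on_iff_eq_card[of "UNIV :: V set" E] by simp
qed

lemma pow_notT: "0 < d \<Longrightarrow> d < 5 \<Longrightarrow> a [^] (d::nat) \<notin> T"
proof
  assume d: "0 < d" "d < 5" and aT': "a [^] d \<in> T"
  obtain e where de: "(d * e) mod 5 = 1"
  proof -
    have "d = 1 \<or> d = 2 \<or> d = 3 \<or> d = 4" using d by auto
    then show ?thesis
    proof (elim disjE)
      assume "d = 1" then show ?thesis using that[of 1] by simp
    next
      assume "d = 2" then show ?thesis using that[of 3] by simp
    next
      assume "d = 3" then show ?thesis using that[of 2] by simp
    next
      assume "d = 4" then show ?thesis using that[of 4] by simp
    qed
  qed
  have "(a [^] d) [^] e \<in> T" using pow_in_subgroup[OF sT aT'] .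
  moreover have "(a [^] d) [^] e = a" using aG nat_pow_pow pow_mod_ord5[OF aG a5, of "d * e"] de by simp
  ultimately show False using aT by simp
qed

lemma phi_inj: "inj_on phi (UNIV \<times> {..<5})"
proof (rule inj_onI)
  fix c d assume c: "c \<in> UNIV \<times> {..<5}" and d: "d \<in> UNIV \<times> {..<5}" and e: "phi c = phi d"
  obtain v k where cv: "c = (v, k)" "k < 5" using c by auto
  obtain w l where dw: "d = (w, l)" "l < 5" using d by auto
  have ec: "E u \<in> carrier G" for u using ET Tcar by simp
  have e1: "E v \<otimes> a [^] k = E w \<otimes> a [^] l" using e cv dw unfolding phi_def by simp
  have "E w \<otimes> (E v \<otimes> a [^] k) \<otimes> a [^] (5 - k) = E w \<otimes> (E w \<otimes> a [^] l) \<otimes> a [^] (5 - k)"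
    using e1 by simp
  then have "E (xorV w v) \<otimes> a [^] (k + (5 - k)) = (E w \<otimes> E w) \<otimes> a [^] (l + (5 - k))"
    using ec aG by (simp add: m_assoc nat_pow_mult[symmetric] E_mult[symmetric])
  then have "E (xorV w v) = a [^] ((l + (5 - k)) mod 5)"
    using cv dw ec aG a5 pow_mod_ord5[OF aG a5, of "l + (5 - k)"] E_mult E0 T_elem ET
    by (simp add: E_mult xorV_self)
  then have aT2: "a [^] ((l + (5 - k)) mod 5) \<in> T" using ET by metis
  have kl: "k = l"
  proof (rule ccontr)
    assume "k \<noteq> l"
    then have "(l + (5 - k)) mod 5 \<noteq> 0" using cv dw by presburger
    then show False using pow_notT[of "(l + (5 - k)) mod 5"] aT2 by simp
  qed
  then have "E v = E w" using e1 ec aG by simp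
  then have "v = w" using E_inj by (simp add: inj_eq)
  then show "c = d" using cv dw kl by simp
qed

lemma card_dom: "card (UNIV \<times> {..<(5::nat)} :: (V \<times> nat) set) = 80"
  using card_V by (simp add: card_cartesian_product)

lemma phi_image: "phi ` (UNIV \<times> {..<5}) = carrier G"
proof -
  have "card (phi ` (UNIV \<times> {..<5})) = 80" using card_image[OF phi_inj] card_dom by simp
  moreover have "phi ` (UNIV \<times> {..<5}) \<subseteq> carrier G" using phi_carrier by auto
  ultimately show ?thesis using card_subset_eq[OF fin] o80 unfolding order_def by metis
qed

end

definition BinvC :: "nat \<Rightarrow> V \<times> nat" where
  "BinvC k = ((Mv^^((5 - k) mod 5)) e1V, (5 - k) mod 5)"

definition gensC :: "nat \<Rightarrow> (V \<times> nat) list" where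
  "gensC k = [(zV, 1), (e1V, k), (zV, 4), BinvC k]"

fun walk :: "nat \<Rightarrow> V \<times> nat \<Rightarrow> nat list \<Rightarrow> (V \<times> nat) list" where
  "walk k c [] = []"
| "walk k c (s # ss) = c # walk k (mulC c (gensC k ! s)) ss"

definition digits :: "char list \<Rightarrow> nat list" where
  "digits cs = map (\<lambda>c. of_char c - 48) cs"

definition steps :: "nat \<Rightarrow> nat list" where
  "steps k = digits (
    if k = 0 then ''10010100101001212101000012210010121010101012212122122122122100122101221012210100''
    else if k = 1 then ''00300122103003332323303212212222110011112103232303321032323223303303212322223300''
    else if k = 2 then ''00300122123001032323303211012121100332323221000032232233212110300332322323232321''
    else if k = 3 then ''00300122103003333010303212212301110000122332112100300032112122223033232332232121''
    else ''00300122103003332330303212221222211223222110121122223032330321232110012212303233'')"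

definition cyc :: "nat \<Rightarrow> (V \<times> nat) list" where
  "cyc k = walk k (zV, 0) (steps k)"

definition good :: "nat \<Rightarrow> bool" where
  "good k \<longleftrightarrow> length (cyc k) = 80 \<and> distinct (cyc k) \<and> (\<forall>c\<in>set (cyc k). snd c < 5)
     \<and> (\<forall>i<80. cyc k ! ((i + 1) mod 80) \<in> set (map (mulC (cyc k ! i)) (gensC k)))
     \<and> mulC (e1V, k) (BinvC k) = (zV, 0)"

lemma good0: "good 0" by code_simp
lemma good1: "good 1" by code_simp
lemma good2: "good 2" by code_simp
lemma good3: "good 3" by code_simp
lemma good4: "good 4" by code_simp

lemma good_all: "k < 5 \<Longrightarrow> good k"
proof -
  assume "k < 5"
  then have "k = 0 \<or> k = 1 \<or> k = 2 \<or> k = 3 \<or> k = 4" by auto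
  then show "good k" using good0 good1 good2 good3 good4 by (elim disjE) simp_all
qed


context G80n
begin

lemma phi_a: "phi (zV, 1) = a" unfolding phi_def zV_def using E0 aG by simp
lemma phi_b: "phi (e1V, k) = n \<otimes> a [^] k" unfolding phi_def using E1 by simp
lemma phi_ainv: "phi (zV, 4) = inv a"
proof -
  have "phi (zV, 4) = a [^] (4::nat)" unfolding phi_def zV_def using E0 aG by simp
  moreover have "a [^] (4::nat) \<otimes> a = \<one>" using a5 aG by (simp add: numeral_eq_Suc del: nat_pow_Suc2) 
  ultimately show ?thesis using inv_equality aG by simp
qed

lemma ham:
  fixes k :: nat
  assumes SG: "S \<subseteq> carrier G" and aS: "a \<in> S" and yS: "n \<otimes> a [^] k \<in> S" and k5: "k < 5"
  shows "cayley_hamiltonian G S"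
proof -
  have gd: "good k" using good_all k5 .
  define cs where "cs = cyc k"
  have len: "length cs = 80" and dist: "distinct cs" and sn: "\<forall>c\<in>set cs. snd c < 5"
    and adj: "\<forall>i<80. cs ! ((i + 1) mod 80) \<in> set (map (mulC (cs ! i)) (gensC k))"
    and binv: "mulC (e1V, k) (BinvC k) = (zV, 0)"
    using gd unfolding good_def cs_def by auto
  define vs where "vs = map phi cs"
  have setcs: "set cs \<subseteq> UNIV \<times> {..<5}" using sn by auto
  have dvs: "distinct vs" unfolding vs_def using dist inj_on_subset[OF phi_inj setcs]
    by (simp add: distinct_map)
  have lvs: "length vs = 80" unfolding vs_def using len by simp
  have svs: "set vs = carrier G"
  proof -
    have "set vs \<subseteq> carrier G" unfolding vs_def using phi_carrier by auto
    moreover have "card (set vs) = 80" using distinct_card[OF dvs] lvs by simp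
    ultimately show ?thesis using card_subset_eq[OF fin] o80 unfolding order_def by metis
  qed
  have yc: "n \<otimes> a [^] k \<in> carrier G" using yS SG by auto
  have phib_inv: "phi (BinvC k) = inv (n \<otimes> a [^] k)"
  proof -
    have "phi (e1V, k) \<otimes> phi (BinvC k) = phi (zV, 0)" using phi_mult[of "(e1V, k)" "BinvC k"] binv by simp
    also have "\<dots> = \<one>" unfolding phi_def zV_def using E0 by simp
    finally have "(n \<otimes> a [^] k) \<otimes> phi (BinvC k) = \<one>" using phi_b by simp
    then have "phi (BinvC k) \<otimes> (n \<otimes> a [^] k) = \<one>" by (rule inv_comm) (use yc phi_carrier in simp_all)
    then show ?thesis using inv_equality[OF _ yc phi_carrier] by simp
  qed
  have gens: "phi g \<in> S \<union> (\<lambda>x. inv x) ` S" if "g \<in> set (gensC k)" for g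
  proof -
    have "g = (zV, 1) \<or> g = (e1V, k) \<or> g = (zV, 4) \<or> g = BinvC k" using that unfolding gensC_def by auto
    then show ?thesis using phi_a phi_b phi_ainv phib_inv aS yS by auto
  qed
  show ?thesis unfolding cayley_hamiltonian_def
  proof (intro exI conjI allI impI)
    show "distinct vs" by (rule dvs)
    show "set vs = carrier G" by (rule svs)
    show "3 \<le> length vs" using lvs by simp
    fix i assume i: "i < length vs"
    then have i80: "i < 80" using lvs by simp
    obtain g where g: "g \<in> set (gensC k)" "cs ! ((i + 1) mod 80) = mulC (cs ! i) g"
      using adj i80 by auto
    have "vs ! ((i + 1) mod length vs) = phi (cs ! ((i + 1) mod 80))" unfolding vs_def using len by simp
    also have "\<dots> = phi (cs ! i) \<otimes> phi g" using g phi_mult by simp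
    also have "phi (cs ! i) = vs ! i" unfolding vs_def using len i80 by simp
    finally have e: "vs ! ((i + 1) mod length vs) = vs ! i \<otimes> phi g" .
    show "cayley_adj G S (vs ! i) (vs ! ((i + 1) mod length vs))"
      unfolding cayley_adj_def using e gens[OF g(1)] phi_carrier unfolding vs_def using len i80
      by (auto intro!: bexI[of _ "phi g"])
  qed
qed

end

lemma (in group) main80:
  assumes "finite (carrier G)"
    and "order G = 80"
    and "\<forall>P. sylow_subgroup G 5 P \<longrightarrow> \<not> P \<lhd> G"
  shows "\<forall>S. S \<subseteq> carrier G \<and> generate G S = carrier G \<longrightarrow> cayley_hamiltonian G S"
proof (intro allI impI)
  fix S assume SS: "S \<subseteq> carrier G \<and> generate G S = carrier G"
  have SG: "S \<subseteq> carrier G" and gS: "generate G S = carrier G" using SS by auto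
  have fin: "finite (carrier G)" and o80: "order G = 80" using assms(1,2) by auto
  obtain T where sT: "subgroup T G" and cT: "card T = 16"
    and outT: "\<forall>x\<in>carrier G - T. x \<noteq> \<one> \<and> x [^] (5::nat) = \<one>"
    and fpfT: "\<forall>x\<in>carrier G - T. \<forall>n\<in>T. n \<otimes> x = x \<otimes> n \<longrightarrow> n = \<one>"
    and nrm: "\<forall>g\<in>carrier G. \<forall>t\<in>T. g \<otimes> t \<otimes> inv g \<in> T"
    using structure80[OF assms(1,2,3)] by blast
  have "\<not> S \<subseteq> T"
  proof
    assume "S \<subseteq> T"
    then have "generate G S \<subseteq> T" using generate_subgroup_incl[OF _ sT] by blast
    then have "carrier G \<subseteq> T" using gS by simp
    then have "card (carrier G) \<le> card T" using card_mono sT subgroup.subset fin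
      by (metis finite_subset)
    then show False using cT o80 unfolding order_def by simp
  qed
  then obtain a where aS: "a \<in> S" and aT: "a \<notin> T" by blast
  have aG: "a \<in> carrier G" using aS SG by auto
  have I1: "G80s G T a"
    by (rule G80s.intro[OF is_group G80s_axioms.intro[OF fin o80 sT cT outT fpfT nrm aG aT]])
  interpret G80s G T a by (rule I1)
  have "\<not> S \<subseteq> generate G {a}"
  proof
    assume "S \<subseteq> generate G {a}"
    then have "generate G S \<subseteq> generate G {a}"
      using generate_subgroup_incl[OF _ generate_is_subgroup[of "{a}"]] aG by blast
    moreover have "finite (generate G {a})" using generate_incl[of "{a}"] aG fin finite_subset by blast
    ultimately have "card (carrier G) \<le> card (generate G {a})" using gS card_mono by metis
    then show False using gen5(1)[OF fin aG a1 a5] o80 unfolding order_def by simp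
  qed
  then obtain y where yS: "y \<in> S" and ya: "y \<notin> generate G {a}" by blast
  have yG: "y \<in> carrier G" using yS SG by auto
  have "T - {\<one>} \<noteq> {}"
  proof
    assume "T - {\<one>} = {}"
    then have "T \<subseteq> {\<one>}" by blast
    then show False using card_mono[of "{\<one>}" T] cT by simp
  qed
  then obtain n0 where n0: "n0 \<in> T" "n0 \<noteq> \<one>" by blast
  interpret N0: G80n G T a n0 by (rule G80n.intro[OF I1 G80n_axioms.intro[OF n0]])
  obtain c where c: "c \<in> UNIV \<times> {..<5}" "y = N0.phi c" using N0.phi_image yG by blast
  obtain v k where vk: "c = (v, k)" "k < 5" using c by auto
  define t where "t = N0.E v"
  have tT: "t \<in> T" unfolding t_def using N0.ET .
  have yt: "y = t \<otimes> a [^] k" using c vk unfolding N0.phi_def t_def by simp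
  have t1: "t \<noteq> \<one>"
  proof
    assume "t = \<one>"
    then have "y = a [^] k" using yt aG by simp
    then have "y \<in> generate G {a}" using gen5(2)[OF fin aG a1 a5] vk by auto
    then show False using ya by simp
  qed
  interpret N: G80n G T a t by (rule G80n.intro[OF I1 G80n_axioms.intro[OF tT t1]])
  show "cayley_hamiltonian G S" using N.ham[OF SG aS _ vk(2)] yt yS by simp
qed

theorem mainTheorem7:
  fixes G :: "('a, 'b) monoid_scheme"
  assumes "group G"
    and "finite (carrier G)"
    and "order G = 80"
    and "\<forall>P. sylow_subgroup G 5 P \<longrightarrow> \<not> P \<lhd> G"
  shows "\<forall>S. S \<subseteq> carrier G \<and> generate G S = carrier G \<longrightarrow> cayley_hamiltonian G S"
  using group.main80[OF assms(1) assms(2) assms(3) assms(4)] .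


end
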